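(* Let $\lambda>0$ and let $K_\lambda$, $M(\lambda)$, $\omega_\lambda$ be as in the context. Let $\gamma>0$, $\Delta>0$, $\sigma>0$. Let $\Lambda=\{\Omega_1,\dots,\Omega_N\}$ be a finite $\Delta$-partition of $\Omega$. Let $\Lambda_*=\{0=z_0<z_1<\dots<z_a=\gamma\}$ be a uniform partition of $[0,\gamma]$ with step $\delta=\gamma/a$. Let $E_\sigma=\{e_1,\dots,e_c\}$ be a finite $\sigma$-net on the unit sphere $E=\{x\in\mathbb{R}^n:\|x\|=1\}$. Define $$B_p^{\gamma,\Delta,\delta,\sigma}(r)=\Big\{x:\Omega\to\mathbb{R}^n:\ x(\xi)=z_{j_i}e_{l_i}\text{ for all }\xi\in\Omega_i,\ \text{where } z_{j_i}\in\Lambda_*,\ e_{l_i}\in E_\sigma\ (i=1,\dots,N),\ \sum_{i=1}^N\mu(\Omega_i)z_{j_i}^p\le r^p\Big\}$$ and $\mathcal{F}_p^{\gamma,\Delta,\delta,\sigma}(r)=\{F(x):x\in B_p^{\gamma,\Delta,\delta,\sigma}(r)\}$, which is a finite set. Then $$h_q\big(\mathcal{F}_p(r),\mathcal{F}_p^{\gamma,\Delta,\delta,\sigma}(r)\big)\le \lambda+\frac{c_*M(\lambda)}{\gamma^{p-1}}+\psi_\lambda(\Delta)+\varphi_\lambda(\delta)+\alpha_\lambda(\gamma,\sigma),$$ where $c_*=2r^p[\mu(\Omega)]^{1/q}$, $\psi_\lambda(\Delta)=2r[\mu(\Omega)]^{2/q}\omega_\lambda(\Delta)$, $\varphi_\lambda(\delta)=M(\lambda)[\mu(\Omega)]^{1+1/q}\delta$,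 and $\alpha_\lambda(\gamma,\sigma)=M(\lambda)[\mu(\Omega)]^{1+1/q}\gamma\sigma$.
   Context: Let $k,m,n\ge 1$ be integers and let $\Omega\subset\mathbb{R}^k$ be a compact set. Let $\mu$ denote Lebesgue measure. Let $p>1$, let $q$ satisfy $1/p+1/q=1$, and let $r>0$. Throughout, $\|\cdot\|$ denotes the Euclidean norm on vectors and the Euclidean (Frobenius) norm on $m\times n$ matrices. $L_p(\Omega;\mathbb{R}^n)$ is the space of Lebesgue measurable $x:\Omega\to\mathbb{R}^n$ with $\|x\|_p=(\int_\Omega\|x(s)\|^p\,ds)^{1/p}<\infty$. Set $B_p(r)=\{x\in L_p(\Omega;\mathbb{R}^n):\|x\|_p\le r\}$. For $U,V\subset L_q(\Omega;\mathbb{R}^m)$, $h_q(U,V)$ denotes the Hausdorff distance $\max\{\sup_{u\in U}\inf_{v\in V}\|u-v\|_q,\ \sup_{v\in V}\inf_{u\in U}\|u-v\|_q\}$. $K:\Omega\times\Omega\to\mathbb{R}^{m\times n}$ is Lebesgue measurable with $\int_\Omega\int_\Omega\|K(\xi,s)\|^q\,d\xi\,ds<\infty$. The Hilbert–Schmidt operator is $F(x)(\xi)=\int_\Omega K(\xi,s)x(s)\,ds$ for a.e. $\xi\in\Omega$, and $\mathcal{F}_p(r)=\{F(x):x\in B_p(r)\}\subset L_q(\Omega;\mathbb{R}^m)$. For $\lambda>0$, $K_\lambda:\Omega\times\Omega\to\mathbb{R}^{m\times n}$ is a continuous function with $\big(\int_\Omega\int_\Omega\|K(\xi,s)-K_\lambda(\xi,s)\|^q\,d\xi\,ds\big)^{1/q}\le\lambda/(2r)$.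 Set $M(\lambda)=\max\{\|K_\lambda(\xi,s)\|:(\xi,s)\in\Omega\times\Omega\}$. For $\Delta>0$, set $\omega_\lambda(\Delta)=\max\{\|K_\lambda(\xi,s_2)-K_\lambda(\xi,s_1)\|:\xi,s_1,s_2\in\Omega,\ \|s_2-s_1\|\le\Delta\}$. A finite $\Delta$-partition of $\Omega$ is a finite family $\{\Omega_1,\dots,\Omega_N\}$ of pairwise disjoint Lebesgue measurable subsets of $\Omega$ whose union is $\Omega$, with $\operatorname{diam}(\Omega_i)=\sup\{\|x-y\|:x,y\in\Omega_i\}\le\Delta$ for each $i$. A finite $\sigma$-net on $E$ is a finite set $E_\sigma\subset E$ such that every point of $E$ is within distance $\sigma$ of some point of $E_\sigma$. *)

theory Defs
  imports "HOL-Analysis.Analysis"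
begin

definition Lp_norm :: "real \<Rightarrow> 'a::euclidean_space set \<Rightarrow> ('a \<Rightarrow> 'b::real_normed_vector) \<Rightarrow> real" where
  "Lp_norm p Om x = (\<integral>s. norm (x s) powr p \<partial>(lebesgue_on Om)) powr (1 / p)"

definition Lp_space :: "real \<Rightarrow> 'a::euclidean_space set \<Rightarrow> ('a \<Rightarrow> 'b::euclidean_space) set" where
  "Lp_space p Om = {x. x \<in> borel_measurable (lebesgue_on Om) \<and>
                       integrable (lebesgue_on Om) (\<lambda>s. norm (x s) powr p)}"

definition Lp_ball :: "real \<Rightarrow> 'a::euclidean_space set \<Rightarrow> real \<Rightarrow> ('a \<Rightarrow> 'b::euclidean_space) set" where
  "Lp_ball p Om r = {x \<in> Lp_space p Om. Lp_norm p Om x \<le> r}"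

definition HS_op :: "'k::euclidean_space set \<Rightarrow> ('k \<Rightarrow> 'k \<Rightarrow> real^'n^'m) \<Rightarrow> ('k \<Rightarrow> real^'n) \<Rightarrow> ('k \<Rightarrow> real^'m)" where
  "HS_op Om K x = (\<lambda>xi. \<integral>s. K xi s *v x s \<partial>(lebesgue_on Om))"

definition haus_dist :: "real \<Rightarrow> 'a::euclidean_space set \<Rightarrow> ('a \<Rightarrow> 'b::real_normed_vector) set \<Rightarrow> ('a \<Rightarrow> 'b) set \<Rightarrow> ereal" where
  "haus_dist q Om U V =
     max (SUP u\<in>U. INF v\<in>V. ereal (Lp_norm q Om (\<lambda>xi. u xi - v xi)))
         (SUP v\<in>V. INF u\<in>U. ereal (Lp_norm q Om (\<lambda>xi. u xi - v xi)))"

definition kernel_max :: "'k::euclidean_space set \<Rightarrow> ('k \<Rightarrow> 'k \<Rightarrow> real^'n^'m) \<Rightarrow> real" where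
  "kernel_max Om Kl = Sup ((\<lambda>(xi, s). norm (Kl xi s)) ` (Om \<times> Om))"

definition kernel_modulus :: "'k::euclidean_space set \<Rightarrow> ('k \<Rightarrow> 'k \<Rightarrow> real^'n^'m) \<Rightarrow> real \<Rightarrow> real" where
  "kernel_modulus Om Kl D = Sup {norm (Kl xi s2 - Kl xi s1) | xi s1 s2.
      xi \<in> Om \<and> s1 \<in> Om \<and> s2 \<in> Om \<and> norm (s2 - s1) \<le> D}"

definition Delta_partition :: "'k::euclidean_space set \<Rightarrow> real \<Rightarrow> nat \<Rightarrow> (nat \<Rightarrow> 'k set) \<Rightarrow> bool" where
  "Delta_partition Om D N P \<longleftrightarrow>
     (\<forall>i<N. P i \<in> sets lebesgue \<and> P i \<subseteq> Om \<and> diameter (P i) \<le> D) \<and>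
     (\<forall>i<N. \<forall>j<N. i \<noteq> j \<longrightarrow> P i \<inter> P j = {}) \<and>
     (\<Union>i<N. P i) = Om"

definition sigma_net :: "'a::metric_space set \<Rightarrow> real \<Rightarrow> 'a set \<Rightarrow> bool" where
  "sigma_net E sg Es \<longleftrightarrow> finite Es \<and> Es \<subseteq> E \<and> (\<forall>x\<in>E. \<exists>e\<in>Es. dist x e \<le> sg)"

text \<open>The discretized ball B_p^{gamma,Delta,delta,sg}(r); the uniform grid is
  z_j = j * gamma / a, j = 0..a, with step delta = gamma / a.\<close>
definition disc_ball :: "real \<Rightarrow> 'k::euclidean_space set \<Rightarrow> real \<Rightarrow> nat \<Rightarrow> (nat \<Rightarrow> 'k set)
    \<Rightarrow> real \<Rightarrow> nat \<Rightarrow> (real^'n) set \<Rightarrow> ('k \<Rightarrow> real^'n) set" where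
  "disc_ball p Om r N P gamma a Es =
     {x. (\<forall>xi. xi \<notin> Om \<longrightarrow> x xi = 0) \<and>
         (\<exists>j l. (\<forall>i<N. j i \<le> a \<and> l i \<in> Es \<and>
                   (\<forall>xi\<in>P i. x xi = (real (j i) * gamma / real a) *\<^sub>R l i)) \<and>
                (\<Sum>i<N. measure lebesgue (P i) * (real (j i) * gamma / real a) powr p) \<le> r powr p)}"

end

theory Submission
  imports Defs
begin
lemma holder:
  fixes f g :: "'a \<Rightarrow> real" and p q :: real
  assumes p: "p > 1" "1/p + 1/q = 1"
  and fm: "f \<in> borel_measurable M" and f0: "\<And>x. x \<in> space M \<Longrightarrow> f x \<ge> 0"
  and fi: "integrable M (\<lambda>x. f x powr p)"
  and gm: "g \<in> borel_measurable M" and g0: "\<And>x. x \<in> space M \<Longrightarrow> g x \<ge> 0"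
  and gi: "integrable M (\<lambda>x. g x powr q)"
  shows "integrable M (\<lambda>x. f x * g x)"
    "(\<integral>x. f x * g x \<partial>M) \<le> (\<integral>x. f x powr p \<partial>M) powr (1/p) * (\<integral>x. g x powr q \<partial>M) powr (1/q)"
proof -
  have "1/q = 1 - 1/p" using p by simp
  moreover have "1/p > 0" "1/p < 1" using p by auto
  ultimately have "1/q > 0" "1/q < 1" by auto
  then have "q > 0" by simp
  with \<open>1/q < 1\<close> have q: "q > 1" by (simp add: divide_less_eq_1_pos)
  have young: "\<And>x. x \<in> space M \<Longrightarrow> f x * g x \<le> f x powr p / p + g x powr q / q"
    using Youngs_inequality p q f0 g0 by blast
  show int: "integrable M (\<lambda>x. f x * g x)"
  proof (rule Bochner_Integration.integrable_bound[where f="\<lambda>x. f x powr p / p + g x powr q / q"])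
    show "integrable M (\<lambda>x. f x powr p / p + g x powr q / q)" using fi gi by auto
    show "(\<lambda>x. f x * g x) \<in> borel_measurable M" using fm gm by measurable
    show "AE x in M. norm (f x * g x) \<le> norm (f x powr p / p + g x powr q / q)"
      proof (intro AE_I2 impI)
      fix x assume x: "x \<in> space M"
      have "0 \<le> f x * g x" using f0[OF x] g0[OF x] by simp
      then show "norm (f x * g x) \<le> norm (f x powr p / p + g x powr q / q)"
        using young[OF x] by simp
    qed
  qed
  define A where "A = (\<integral>x. f x powr p \<partial>M)"
  define B where "B = (\<integral>x. g x powr q \<partial>M)"
  have A0: "A \<ge> 0" unfolding A_def by (simp add: integral_nonneg_AE)
  have B0: "B \<ge> 0" unfolding B_def by (simp add: integral_nonneg_AE)
  have fg0: "(\<integral>x. f x * g x \<partial>M) = 0" if "A = 0 \<or> B = 0"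
  proof -
    have "AE x in M. f x * g x = 0"
    proof (cases "A = 0")
      case True
      then have "AE x in M. f x powr p = 0"
        using integral_nonneg_eq_0_iff_AE[OF fi] unfolding A_def by auto
      then show ?thesis by (rule AE_mp) (auto intro!: AE_I2)
    next
      case False
      then have "B = 0" using that by auto
      then have "AE x in M. g x powr q = 0"
        using integral_nonneg_eq_0_iff_AE[OF gi] unfolding B_def by auto
      then show ?thesis by (rule AE_mp) (auto intro!: AE_I2)
    qed
    then show ?thesis by (simp add: integral_eq_zero_AE)
  qed
  show "(\<integral>x. f x * g x \<partial>M) \<le> (\<integral>x. f x powr p \<partial>M) powr (1/p) * (\<integral>x. g x powr q \<partial>M) powr (1/q)"
  proof (cases "A = 0 \<or> B = 0")
    case True
    then show ?thesis using fg0 A_def B_def A0 B0 by auto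
  next
    case False
    then have Ap: "A > 0" and Bp: "B > 0" using A0 B0 by auto
    define \<alpha> where "\<alpha> = A powr (1/p)"
    define \<beta> where "\<beta> = B powr (1/q)"
    have ap: "\<alpha> > 0" "\<beta> > 0" using Ap Bp by (auto simp: \<alpha>_def \<beta>_def)
    have pt: "f x * g x \<le> \<alpha> * \<beta> * ((f x / \<alpha>) powr p / p + (g x / \<beta>) powr q / q)"
      if x: "x \<in> space M" for x
    proof -
      have "(f x / \<alpha>) * (g x / \<beta>) \<le> (f x / \<alpha>) powr p / p + (g x / \<beta>) powr q / q"
        using Youngs_inequality[OF p(1) q p(2), of "f x / \<alpha>" "g x / \<beta>"] f0[OF x] g0[OF x] ap by auto
      then show ?thesis using ap
        by (simp add: field_simps)
    qed
    have e1: "(f x / \<alpha>) powr p = f x powr p / A" if x: "x \<in> space M" for x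
      using f0[OF x] ap Ap p by (simp add: powr_divide \<alpha>_def powr_powr)
    have e2: "(g x / \<beta>) powr q = g x powr q / B" if x: "x \<in> space M" for x
      using g0[OF x] ap Bp q by (simp add: powr_divide \<beta>_def powr_powr)
    have "(\<integral>x. f x * g x \<partial>M) \<le> (\<integral>x. \<alpha> * \<beta> * (f x powr p / A / p + g x powr q / B / q) \<partial>M)"
      apply (rule integral_mono[OF int])
      using fi gi apply auto[1]
      using pt e1 e2 by auto
    also have "\<dots> = \<alpha> * \<beta> * (A / A / p + B / B / q)"
      using fi gi by (simp add: A_def B_def)
    also have "\<dots> = \<alpha> * \<beta>" using Ap Bp p by simp
    finally show ?thesis by (simp add: \<alpha>_def \<beta>_def A_def B_def)
  qed
qed

lemma minkowski_const:
  fixes f :: "'a \<Rightarrow> real" and q c :: real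
  assumes q: "q > 1" and fin: "finite_measure M"
  and fm: "f \<in> borel_measurable M" and f0: "\<And>x. x \<in> space M \<Longrightarrow> f x \<ge> 0"
  and fi: "integrable M (\<lambda>x. f x powr q)" and c: "c \<ge> 0"
  shows "integrable M (\<lambda>x. (f x + c) powr q)"
    "(\<integral>x. (f x + c) powr q \<partial>M) powr (1/q) \<le> (\<integral>x. f x powr q \<partial>M) powr (1/q) + c * measure M (space M) powr (1/q)"
proof -
  interpret finite_measure M by (rule fin)
  have bnd: "(f x + c) powr q \<le> 2 powr q * (f x powr q + c powr q)" if x: "x \<in> space M" for x
  proof -
    have "f x + c \<le> 2 * max (f x) c" by simp
    then have "(f x + c) powr q \<le> (2 * max (f x) c) powr q"
      using f0[OF x] c q by (intro powr_mono2) auto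
    also have "\<dots> = 2 powr q * max (f x) c powr q" using f0[OF x] c by (simp add: powr_mult)
    also have "max (f x) c powr q \<le> f x powr q + c powr q" by (simp add: max_def)
    finally show ?thesis by simp
  qed
  show int: "integrable M (\<lambda>x. (f x + c) powr q)"
  proof (rule Bochner_Integration.integrable_bound[where f="\<lambda>x. 2 powr q * (f x powr q + c powr q)"])
    show "integrable M (\<lambda>x. 2 powr q * (f x powr q + c powr q))" using fi by auto
    show "(\<lambda>x. (f x + c) powr q) \<in> borel_measurable M" using fm by measurable
    show "AE x in M. norm ((f x + c) powr q) \<le> norm (2 powr q * (f x powr q + c powr q))"
      using bnd by (intro AE_I2) auto
  qed
  define q' where "q' = q / (q - 1)"
  have q'1: "q' > 1" using q by (simp add: q'_def)
  have qq': "1/q + 1/q' = 1" using q by (simp add: q'_def field_simps)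
  define h where "h x = (f x + c) powr (q - 1)" for x
  have hm: "h \<in> borel_measurable M" unfolding h_def using fm by measurable
  have hpow: "h x powr q' = (f x + c) powr q" if x: "x \<in> space M" for x
    using f0[OF x] c q by (simp add: h_def powr_powr q'_def)
  have hi: "integrable M (\<lambda>x. h x powr q')"
    using int by (subst Bochner_Integration.integrable_cong[OF refl hpow]) auto
  have hint: "(\<integral>x. h x powr q' \<partial>M) = (\<integral>x. (f x + c) powr q \<partial>M)"
    by (rule Bochner_Integration.integral_cong[OF refl]) (auto simp: hpow)
  define I where "I = (\<integral>x. (f x + c) powr q \<partial>M)"
  define A where "A = (\<integral>x. f x powr q \<partial>M)"
  have I0: "I \<ge> 0" unfolding I_def by (simp add: integral_nonneg_AE)
  have A0: "A \<ge> 0" unfolding A_def by (simp add: integral_nonneg_AE)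
  have h0: "\<And>x. x \<in> space M \<Longrightarrow> h x \<ge> 0" by (simp add: h_def)
  note H1 = holder[OF q qq' fm f0 fi hm h0 hi]
  have cm: "(\<lambda>x. c) \<in> borel_measurable M" by simp
  have ci: "integrable M (\<lambda>x. c powr q)" by simp
  note H2 = holder[OF q qq' cm _ ci hm h0 hi]
  have split: "(f x + c) powr q = f x * h x + c * h x" if x: "x \<in> space M" for x
  proof (cases "f x + c = 0")
    case True then show ?thesis using f0[OF x] c q by (simp add: h_def)
  next
    case False
    then have "f x + c > 0" using f0[OF x] c by linarith
    then have "(f x + c) powr q = (f x + c) powr 1 * (f x + c) powr (q - 1)"
      using powr_add[of "f x + c" 1 "q - 1"] by simp
    then show ?thesis using \<open>f x + c > 0\<close> by (simp add: h_def algebra_simps)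
  qed
  have "I = (\<integral>x. f x * h x + c * h x \<partial>M)" unfolding I_def
    by (rule Bochner_Integration.integral_cong[OF refl]) (auto simp: split)
  also have "\<dots> = (\<integral>x. f x * h x \<partial>M) + (\<integral>x. c * h x \<partial>M)"
    using H1(1) H2(1) c by (intro Bochner_Integration.integral_add) auto
  also have "\<dots> \<le> A powr (1/q) * I powr (1/q') + (c powr q * measure M (space M)) powr (1/q) * I powr (1/q')"
    using H1(2) H2(2) c by (simp add: A_def I_def hint mult.commute)
  also have "(c powr q * measure M (space M)) powr (1/q) = c * measure M (space M) powr (1/q)"
    using c q by (simp add: powr_mult powr_powr)
  finally have le: "I \<le> (A powr (1/q) + c * measure M (space M) powr (1/q)) * I powr (1/q')"
    by (simp add: algebra_simps)
  show "I powr (1/q) \<le> A powr (1/q) + c * measure M (space M) powr (1/q)"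
    unfolding I_def[symmetric] A_def[symmetric]
  proof (cases "I = 0")
    case True then show ?thesis using c q by simp
  next
    case False
    then have Ip: "I > 0" using I0 by simp
    have "I = I powr (1/q) * I powr (1/q')" using Ip qq' by (simp add: powr_add[symmetric])
    with le have "I powr (1/q) * I powr (1/q') \<le> (A powr (1/q) + c * measure M (space M) powr (1/q)) * I powr (1/q')"
      by simp
    then show ?thesis using Ip by simp
  qed
qed

lemma ex_borel_rep:
  fixes f :: "'a::euclidean_space \<Rightarrow> 'b::euclidean_space"
  assumes "f \<in> borel_measurable lebesgue"
  shows "\<exists>g \<in> borel_measurable lborel. AE x in lborel. f x = g x"
proof -
  have "\<forall>b\<in>Basis. \<exists>g\<in>borel_measurable lborel. AE x in lborel. f x \<bullet> b = g x"
  proof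
    fix b :: 'b assume "b \<in> Basis"
    have "(\<lambda>x. f x \<bullet> b) \<in> borel_measurable (completion lborel)" using assms by measurable
    then show "\<exists>g\<in>borel_measurable lborel. AE x in lborel. f x \<bullet> b = g x"
      by (rule completion_ex_borel_measurable_real)
  qed
  then obtain g where gm: "\<And>b. b \<in> Basis \<Longrightarrow> g b \<in> borel_measurable lborel"
    and ga: "\<And>b. b \<in> Basis \<Longrightarrow> AE x in lborel. f x \<bullet> b = g b x"
    by metis
  show ?thesis
  proof (intro bexI)
    show "(\<lambda>x. \<Sum>b\<in>Basis. g b x *\<^sub>R b) \<in> borel_measurable lborel"
      using gm by (intro borel_measurable_sum borel_measurable_scaleR) auto
    have "AE x in lborel. \<forall>b\<in>Basis. f x \<bullet> b = g b x"
      using ga by (simp add: eventually_ball_finite_distrib)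
    then show "AE x in lborel. f x = (\<Sum>b\<in>Basis. g b x *\<^sub>R b)"
    proof (rule AE_mp, intro AE_I2 impI)
      fix x assume "\<forall>b\<in>Basis. f x \<bullet> b = g b x"
      then show "f x = (\<Sum>b\<in>Basis. g b x *\<^sub>R b)"
        by (metis (no_types, lifting) euclidean_representation sum.cong)
    qed
  qed
qed

lemma closed_sets_lebesgue: "closed S \<Longrightarrow> S \<in> sets lebesgue"
  by (simp add: borel_closed)

lemma kernel_sections:
  fixes Om :: "'a::euclidean_space set" and K :: "'a \<Rightarrow> 'a \<Rightarrow> 'b::euclidean_space"
  assumes Om: "closed Om"
  and Km: "(\<lambda>(xi,s). K xi s) \<in> borel_measurable (lebesgue_on (Om \<times> Om))"
  shows "AE xi in lborel. xi \<in> Om \<longrightarrow> (\<lambda>s. K xi s) \<in> borel_measurable (lebesgue_on Om)"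
proof -
  have OO: "Om \<times> Om \<in> sets lebesgue" using Om by (intro closed_sets_lebesgue closed_Times) auto
  define f where "f z = indicator (Om \<times> Om) z *\<^sub>R K (fst z) (snd z)" for z
  have "f \<in> borel_measurable lebesgue"
    using Km OO unfolding f_def
    by (subst (asm) borel_measurable_restrict_space_iff) (auto simp: case_prod_unfold)
  then obtain g where gm: "g \<in> borel_measurable lborel" and ga: "AE z in lborel. f z = g z"
    using ex_borel_rep by blast
  have gm2: "g \<in> borel_measurable (lborel \<Otimes>\<^sub>M lborel)" using gm by (simp add: lborel_prod)
  have "AE z in (lborel \<Otimes>\<^sub>M lborel). f z = g z" unfolding lborel_prod by (rule ga)
  then have ae: "AE xi in lborel. AE s in lborel. f (xi, s) = g (xi, s)"
    by (rule lborel_pair.AE_pair)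
  show ?thesis
  proof (rule AE_mp[OF ae], intro AE_I2 impI)
    fix xi assume a: "AE s in lborel. f (xi, s) = g (xi, s)" and xi: "xi \<in> Om"
    have "(\<lambda>s. g (xi, s)) \<in> borel_measurable lborel"
      using measurable_Pair2[OF gm2] by simp
    then have "(\<lambda>s. g (xi, s)) \<in> borel_measurable lebesgue"
      by (rule measurable_completion)
    moreover have "AE s in lebesgue. g (xi, s) = f (xi, s)"
      using a by (intro AE_completion) auto
    ultimately have "(\<lambda>s. f (xi, s)) \<in> borel_measurable lebesgue"
      by (rule borel_measurable_AE)
    then have "(\<lambda>s. f (xi, s)) \<in> borel_measurable (lebesgue_on Om)"
      by (rule measurable_restrict_space1)
    then show "(\<lambda>s. K xi s) \<in> borel_measurable (lebesgue_on Om)"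
      by (rule measurable_cong[THEN iffD1, rotated]) (auto simp: f_def xi)
  qed
qed

lemma kernel_Lq:
  fixes Om :: "'a::euclidean_space set" and G :: "'a \<Rightarrow> 'a \<Rightarrow> real"
  assumes Om: "closed Om"
  and Gm: "(\<lambda>(xi,s). G xi s) \<in> borel_measurable (lebesgue_on (Om \<times> Om))"
  and Gi: "integrable (lebesgue_on (Om \<times> Om)) (\<lambda>(xi,s). G xi s)"
  and G0: "\<And>xi s. G xi s \<ge> 0"
  shows "\<exists>kq. kq \<in> borel_measurable lborel \<and>
     (AE xi in lborel. xi \<in> Om \<longrightarrow> (\<integral>\<^sup>+s. ennreal (G xi s) \<partial>lebesgue_on Om) = kq xi) \<and>
     (\<integral>\<^sup>+xi. kq xi \<partial>lborel) = ennreal (\<integral>z. (\<lambda>(xi,s). G xi s) z \<partial>lebesgue_on (Om \<times> Om))"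
proof -
  have OO: "Om \<times> Om \<in> sets lebesgue" using Om by (intro closed_sets_lebesgue closed_Times) auto
  have Oms: "Om \<in> sets lebesgue" using Om by (rule closed_sets_lebesgue)
  define F where "F z = ennreal (indicator (Om \<times> Om) z *\<^sub>R G (fst z) (snd z))" for z
  have "(\<lambda>z. indicator (Om \<times> Om) z *\<^sub>R G (fst z) (snd z)) \<in> borel_measurable lebesgue"
    using Gm OO
    by (subst (asm) borel_measurable_restrict_space_iff) (auto simp: case_prod_unfold)
  then have "F \<in> borel_measurable (completion lborel)" unfolding F_def by measurable
  then obtain g where gm: "g \<in> borel_measurable lborel" and ga: "AE z in lborel. F z = g z"
    using completion_ex_borel_measurable by blast
  have gm2: "g \<in> borel_measurable (lborel \<Otimes>\<^sub>M lborel)" using gm by (simp add: lborel_prod)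
  have ga2: "AE z in (lborel \<Otimes>\<^sub>M lborel). F z = g z" unfolding lborel_prod by (rule ga)
  then have ae: "AE xi in lborel. AE s in lborel. F (xi, s) = g (xi, s)"
    by (rule lborel_pair.AE_pair)
  define kq where "kq xi = (\<integral>\<^sup>+s. g (xi, s) \<partial>lborel)" for xi
  show ?thesis
  proof (intro exI conjI)
    show "kq \<in> borel_measurable lborel"
      unfolding kq_def using lborel.borel_measurable_nn_integral_fst[OF gm2] by simp
    show "AE xi in lborel. xi \<in> Om \<longrightarrow> (\<integral>\<^sup>+s. ennreal (G xi s) \<partial>lebesgue_on Om) = kq xi"
    proof (rule AE_mp[OF ae], intro AE_I2 impI)
      fix xi assume a: "AE s in lborel. F (xi, s) = g (xi, s)" and xi: "xi \<in> Om"
      have "(\<integral>\<^sup>+s. ennreal (G xi s) \<partial>lebesgue_on Om) = (\<integral>\<^sup>+s. ennreal (G xi s) * indicator Om s \<partial>lebesgue)"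
        using Oms by (simp add: nn_integral_restrict_space)
      also have "\<dots> = (\<integral>\<^sup>+s. F (xi, s) \<partial>lebesgue)"
        by (rule nn_integral_cong) (auto simp: F_def indicator_def xi)
      also have "\<dots> = (\<integral>\<^sup>+s. F (xi, s) \<partial>lborel)"
        by (rule nn_integral_completion)
      also have "\<dots> = kq xi" unfolding kq_def
        using a by (rule nn_integral_cong_AE)
      finally show "(\<integral>\<^sup>+s. ennreal (G xi s) \<partial>lebesgue_on Om) = kq xi" .
    qed
    have "(\<integral>\<^sup>+xi. kq xi \<partial>lborel) = integral\<^sup>N (lborel \<Otimes>\<^sub>M lborel) g"
      unfolding kq_def using lborel.nn_integral_fst[OF gm2] by simp
    also have "\<dots> = integral\<^sup>N (lborel \<Otimes>\<^sub>M lborel) F"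
      using ga2 by (intro nn_integral_cong_AE) (auto elim: AE_mp)
    also have "\<dots> = integral\<^sup>N lborel F" by (simp add: lborel_prod)
    also have "\<dots> = integral\<^sup>N lebesgue F" by (rule nn_integral_completion[symmetric])
    also have "\<dots> = (\<integral>\<^sup>+z. ennreal ((\<lambda>(xi,s). G xi s) z) * indicator (Om \<times> Om) z \<partial>lebesgue)"
      by (rule nn_integral_cong) (auto simp: F_def indicator_def case_prod_unfold)
    also have "\<dots> = (\<integral>\<^sup>+z. ennreal ((\<lambda>(xi,s). G xi s) z) \<partial>lebesgue_on (Om \<times> Om))"
      using OO by (simp add: nn_integral_restrict_space)
    also have "\<dots> = ennreal (\<integral>z. (\<lambda>(xi,s). G xi s) z \<partial>lebesgue_on (Om \<times> Om))"
      using Gi G0 by (intro nn_integral_eq_integral) auto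
    finally show "(\<integral>\<^sup>+xi. kq xi \<partial>lborel) = ennreal (\<integral>z. (\<lambda>(xi,s). G xi s) z \<partial>lebesgue_on (Om \<times> Om))" .
  qed
qed

lemma norm_mv: fixes A :: "real^'n^'m" shows "norm (A *v x) \<le> norm A * norm x"
proof -
  have c: "(A *v x) $ i = A $ i \<bullet> x" for i
    by (simp add: matrix_vector_mult_def inner_vec_def)
  have nA: "(\<Sum>i\<in>UNIV. (norm (A $ i))\<^sup>2) = (norm A)\<^sup>2"
    by (simp only: norm_vec_def[of A] L2_set_def) (simp add: sum_nonneg)
  have "(norm (A *v x))\<^sup>2 = (\<Sum>i\<in>UNIV. ((A *v x) $ i)\<^sup>2)"
    by (simp add: norm_vec_def L2_set_def sum_nonneg)
  also have "\<dots> \<le> (\<Sum>i\<in>UNIV. (norm (A $ i))\<^sup>2 * (norm x)\<^sup>2)"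
  proof (rule sum_mono)
    fix i
    have "\<bar>A $ i \<bullet> x\<bar> \<le> norm (A $ i) * norm x" by (rule Cauchy_Schwarz_ineq2)
    then have "(A $ i \<bullet> x)\<^sup>2 \<le> (norm (A $ i) * norm x)\<^sup>2"
      by (metis abs_ge_zero power2_abs power_mono)
    then show "((A *v x) $ i)\<^sup>2 \<le> (norm (A $ i))\<^sup>2 * (norm x)\<^sup>2" by (simp add: c power_mult_distrib)
  qed
  also have "\<dots> = (norm A)\<^sup>2 * (norm x)\<^sup>2"
    by (simp only: sum_distrib_right[symmetric] nA)
  also have "\<dots> = (norm A * norm x)\<^sup>2" by (simp add: power_mult_distrib)
  finally show ?thesis
    by (meson mult_nonneg_nonneg norm_ge_zero power2_le_imp_le)
qed

lemma kernel_bounds: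
  fixes Om :: "'k::euclidean_space set" and Kl :: "'k \<Rightarrow> 'k \<Rightarrow> real^'n^'m"
  assumes Om: "compact Om" "Om \<noteq> {}" and cont: "continuous_on (Om \<times> Om) (\<lambda>(xi, s). Kl xi s)"
    and D: "D \<ge> 0"
  shows "\<And>xi s. xi \<in> Om \<Longrightarrow> s \<in> Om \<Longrightarrow> norm (Kl xi s) \<le> kernel_max Om Kl"
    and "kernel_max Om Kl \<ge> 0"
    and "\<And>xi s1 s2. xi \<in> Om \<Longrightarrow> s1 \<in> Om \<Longrightarrow> s2 \<in> Om \<Longrightarrow> norm (s2 - s1) \<le> D \<Longrightarrow>
            norm (Kl xi s2 - Kl xi s1) \<le> kernel_modulus Om Kl D"
    and "kernel_modulus Om Kl D \<ge> 0"
proof -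
  let ?S = "(\<lambda>(xi, s). norm (Kl xi s)) ` (Om \<times> Om)"
  have "continuous_on (Om \<times> Om) (\<lambda>z. norm ((\<lambda>(xi, s). Kl xi s) z))"
    using cont by (intro continuous_on_norm)
  then have "continuous_on (Om \<times> Om) (\<lambda>(xi, s). norm (Kl xi s))"
    by (simp add: case_prod_unfold)
  then have "compact ?S" using Om by (intro compact_continuous_image compact_Times) auto
  then have bdd: "bdd_above ?S" by (intro bounded_imp_bdd_above compact_imp_bounded)
  show up: "\<And>xi s. xi \<in> Om \<Longrightarrow> s \<in> Om \<Longrightarrow> norm (Kl xi s) \<le> kernel_max Om Kl"
    unfolding kernel_max_def by (rule cSup_upper[OF _ bdd]) auto
  obtain o0 where o0: "o0 \<in> Om" using Om by auto
  show "kernel_max Om Kl \<ge> 0" using up[OF o0 o0] norm_ge_zero order_trans by blast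
  let ?T = "{norm (Kl xi s2 - Kl xi s1) | xi s1 s2.
      xi \<in> Om \<and> s1 \<in> Om \<and> s2 \<in> Om \<and> norm (s2 - s1) \<le> D}"
  have bddT: "bdd_above ?T"
  proof (rule bdd_aboveI)
    fix t assume "t \<in> ?T"
    then obtain xi s1 s2 where t: "t = norm (Kl xi s2 - Kl xi s1)" "xi \<in> Om" "s1 \<in> Om" "s2 \<in> Om"
      by blast
    have "t \<le> norm (Kl xi s2) + norm (Kl xi s1)" unfolding t by (rule norm_triangle_ineq4)
    also have "\<dots> \<le> 2 * kernel_max Om Kl" using up[of xi s2] up[of xi s1] t by linarith
    finally show "t \<le> 2 * kernel_max Om Kl" .
  qed
  show upT: "\<And>xi s1 s2. xi \<in> Om \<Longrightarrow> s1 \<in> Om \<Longrightarrow> s2 \<in> Om \<Longrightarrow> norm (s2 - s1) \<le> D \<Longrightarrow>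
            norm (Kl xi s2 - Kl xi s1) \<le> kernel_modulus Om Kl D"
    unfolding kernel_modulus_def by (rule cSup_upper[OF _ bddT]) blast
  show "kernel_modulus Om Kl D \<ge> 0" using upT[OF o0 o0 o0] D by simp
qed

lemma partition_unity:
  assumes part: "Delta_partition Om D N P" and s: "s \<in> Om"
  shows "(\<Sum>i<N. indicator (P i) s :: real) = 1"
proof -
  from part s obtain i where i: "i < N" "s \<in> P i" unfolding Delta_partition_def by blast
  have "(\<Sum>i<N. indicator (P i) s :: real) = (\<Sum>j\<in>{i}. indicator (P j) s)"
  proof (rule sum.mono_neutral_cong_right)
    show "{i} \<subseteq> {..<N}" using i by auto
    show "\<forall>j\<in>{..<N} - {i}. indicator (P j) s = (0::real)"
    proof
      fix j assume j: "j \<in> {..<N} - {i}"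
      then have "P i \<inter> P j = {}" using i part unfolding Delta_partition_def by auto
      then show "indicator (P j) s = (0::real)" using i by (auto simp: indicator_def)
    qed
  qed auto
  then show ?thesis using i by simp
qed

lemma pw_sum:
  fixes g :: "nat \<Rightarrow> 'a::euclidean_space \<Rightarrow> 'b::real_vector"
  assumes part: "Delta_partition Om D N P" and s: "s \<in> Om"
    and eq: "\<And>i. i < N \<Longrightarrow> s \<in> P i \<Longrightarrow> f s = g i s"
  shows "f s = (\<Sum>i<N. indicator (P i) s *\<^sub>R g i s)"
proof -
  have "f s = (\<Sum>i<N. indicator (P i) s :: real) *\<^sub>R f s"
    using partition_unity[OF part s] by simp
  also have "\<dots> = (\<Sum>i<N. indicator (P i) s *\<^sub>R f s)" by (rule scaleR_left.sum)
  also have "\<dots> = (\<Sum>i<N. indicator (P i) s *\<^sub>R g i s)"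
    by (rule sum.cong) (auto simp: indicator_def eq)
  finally show ?thesis .
qed

lemma part_sets:
  assumes part: "Delta_partition Om D N P" and i: "i < N"
  shows "P i \<in> sets lebesgue" "P i \<subseteq> Om" "P i \<in> sets (lebesgue_on Om)"
proof -
  show "P i \<in> sets lebesgue" "P i \<subseteq> Om" using part i unfolding Delta_partition_def by auto
  moreover have "Om \<in> sets lebesgue"
  proof -
    have "Om = (\<Union>i<N. P i)" using part unfolding Delta_partition_def by auto
    also have "\<dots> \<in> sets lebesgue" using part unfolding Delta_partition_def by auto
    finally show ?thesis .
  qed
  ultimately show "P i \<in> sets (lebesgue_on Om)"
    by (simp add: sets_restrict_space_iff)
qed

lemma int_indicator_on:
  assumes Om: "compact Om" and part: "Delta_partition Om D N P" and i: "i < N"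
  shows "(\<integral>s. indicator (P i) s \<partial>lebesgue_on Om) = measure lebesgue (P i)"
proof -
  have Oms: "Om \<in> sets lebesgue" using Om by (simp add: borel_compact)
  have "(\<integral>s. indicator (P i) s \<partial>lebesgue_on Om) = measure (lebesgue_on Om) (P i \<inter> Om)"
    using Bochner_Integration.integral_indicator[of "lebesgue_on Om" "P i"] by simp
  also have "\<dots> = measure lebesgue (P i)"
    using part_sets[OF part i] Oms by (simp add: Int_absorb2 measure_restrict_space)
  finally show ?thesis .
qed

lemma disc_in_ball:
  fixes Om :: "'k::euclidean_space set"
  assumes Om: "compact Om" and p: "p > 1" and r: "r > 0"
    and part: "Delta_partition Om D N P" and net: "Es \<subseteq> sphere 0 1"
    and y: "y \<in> disc_ball p Om r N P gamma a Es" and gamma: "gamma > 0"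
  shows "y \<in> Lp_ball p Om r" "integrable (lebesgue_on Om) (\<lambda>s. norm (y s) powr p)"
    "(\<integral>s. norm (y s) powr p \<partial>lebesgue_on Om) \<le> r powr p"
proof -
  have Oms: "Om \<in> sets lebesgue" using Om by (simp add: borel_compact)
  interpret fin: finite_measure "lebesgue_on Om"
    using Om by (intro finite_measure_lebesgue_on lmeasurable_compact)
  from y obtain j l where jl: "\<forall>i<N. j i \<le> a \<and> l i \<in> Es \<and>
                   (\<forall>xi\<in>P i. y xi = (real (j i) * gamma / real a) *\<^sub>R l i)"
    and sum: "(\<Sum>i<N. measure lebesgue (P i) * (real (j i) * gamma / real a) powr p) \<le> r powr p"
    unfolding disc_ball_def by blast
  define z where "z i = real (j i) * gamma / real a" for i
  have z0: "z i \<ge> 0" for i using gamma by (simp add: z_def)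
  have nl: "i < N \<Longrightarrow> norm (l i) = 1" for i using jl net by auto
  have yeq: "y s = (\<Sum>i<N. indicator (P i) s *\<^sub>R (z i *\<^sub>R l i))" if s: "s \<in> Om" for s
    using pw_sum[OF part s, of y "\<lambda>i s. z i *\<^sub>R l i"] jl by (auto simp: z_def)
  have ind_m: "i < N \<Longrightarrow> indicator (P i) \<in> borel_measurable (lebesgue_on Om)" for i
    using part_sets(3)[OF part] by (intro borel_measurable_indicator) auto
  have ym: "y \<in> borel_measurable (lebesgue_on Om)"
  proof -
    have "(\<lambda>s. \<Sum>i<N. indicator (P i) s *\<^sub>R (z i *\<^sub>R l i)) \<in> borel_measurable (lebesgue_on Om)"
      using ind_m by (intro borel_measurable_sum borel_measurable_scaleR) auto
    then show ?thesis by (rule measurable_cong[THEN iffD1, rotated]) (simp add: yeq)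
  qed
  have npow: "norm (y s) powr p = (\<Sum>i<N. indicator (P i) s * z i powr p)" if s: "s \<in> Om" for s
  proof -
    have "norm (y s) powr p = (\<Sum>i<N. indicator (P i) s *\<^sub>R (norm (y s) powr p))"
      using pw_sum[OF part s, of "\<lambda>s. norm (y s) powr p" "\<lambda>i s. norm (y s) powr p"] by simp
    also have "\<dots> = (\<Sum>i<N. indicator (P i) s * z i powr p)"
    proof (rule sum.cong)
      fix i assume "i \<in> {..<N}"
      then have i: "i < N" by simp
      show "indicator (P i) s *\<^sub>R norm (y s) powr p = indicator (P i) s * z i powr p"
      proof (cases "s \<in> P i")
        case True
        then have "y s = z i *\<^sub>R l i" using jl i by (auto simp: z_def)
        then show ?thesis using True nl[OF i] z0 by simp
      qed simp
    qed simp
    finally show ?thesis .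
  qed
  have int_i: "integrable (lebesgue_on Om) (\<lambda>s. indicator (P i) s * z i powr p)" if "i < N" for i
  proof -
    have "(\<lambda>s. indicator (P i) s * z i powr p) \<in> borel_measurable (lebesgue_on Om)"
      using ind_m[OF that] by (intro borel_measurable_times) auto
    then show "integrable (lebesgue_on Om) (\<lambda>s. indicator (P i) s * z i powr p)"
      by (intro fin.integrable_const_bound[where B="z i powr p"]) (auto simp: indicator_def)
  qed
  have ii: "integrable (lebesgue_on Om) (\<lambda>s. \<Sum>i<N. indicator (P i) s * z i powr p)"
    using int_i by (intro Bochner_Integration.integrable_sum) auto
  show yi: "integrable (lebesgue_on Om) (\<lambda>s. norm (y s) powr p)"
    using ii by (subst Bochner_Integration.integrable_cong[OF refl npow]) auto
  have "(\<integral>s. norm (y s) powr p \<partial>lebesgue_on Om) = (\<integral>s. (\<Sum>i<N. indicator (P i) s * z i powr p) \<partial>lebesgue_on Om)"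
    by (rule Bochner_Integration.integral_cong[OF refl]) (simp add: npow)
  also have "\<dots> = (\<Sum>i<N. (\<integral>s. indicator (P i) s \<partial>lebesgue_on Om) * z i powr p)"
    using int_i by (subst Bochner_Integration.integral_sum) auto
  also have "\<dots> = (\<Sum>i<N. measure lebesgue (P i) * z i powr p)"
    by (rule sum.cong) (use int_indicator_on[OF Om part] in auto)
  also have "\<dots> \<le> r powr p" using sum by (simp add: z_def)
  finally show le: "(\<integral>s. norm (y s) powr p \<partial>lebesgue_on Om) \<le> r powr p" .
  have "Lp_norm p Om y \<le> (r powr p) powr (1/p)"
    unfolding Lp_norm_def using le p by (intro powr_mono2) (auto intro: integral_nonneg_AE)
  also have "\<dots> = r" using r p by (simp add: powr_powr)
  finally show "y \<in> Lp_ball p Om r"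
    unfolding Lp_ball_def Lp_space_def using ym yi by auto
qed

lemma bb_mv: "bounded_bilinear ((*v) :: real^'n^'m \<Rightarrow> real^'n \<Rightarrow> real^'m)"
proof
  fix a a' :: "real^'n^'m" and b b' :: "real^'n" and r :: real
  show "(a + a') *v b = a *v b + a' *v b" by (rule matrix_vector_mult_add_rdistrib)
  show "a *v (b + b') = a *v b + a *v b'" by (rule matrix_vector_right_distrib)
  show "(r *\<^sub>R a) *v b = r *\<^sub>R (a *v b)" by (simp add: scaleR_matrix_vector_assoc)
  show "a *v (r *\<^sub>R b) = r *\<^sub>R (a *v b)" by (rule matrix_vector_mult_scaleR)
  show "\<exists>K. \<forall>a b. norm (a *v b) \<le> norm (a::real^'n^'m) * norm (b::real^'n) * K"
    by (rule exI[of _ 1]) (simp add: norm_mv)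
qed

lemma mv_cont: "continuous_on UNIV (\<lambda>x::((real^'n^'m) \<times> (real^'n)). fst x *v snd x)"
proof -
  have c1: "continuous_on UNIV (\<lambda>x::((real^'n^'m) \<times> (real^'n)). fst x)" by (intro continuous_intros)
  have c2: "continuous_on UNIV (\<lambda>x::((real^'n^'m) \<times> (real^'n)). snd x)" by (intro continuous_intros)
  show ?thesis
    using bounded_bilinear.continuous_on[OF bb_mv c1 c2] by simp
qed

lemma mv_measurable[measurable]:
  fixes f :: "'a \<Rightarrow> real^'n^'m" and g :: "'a \<Rightarrow> real^'n"
  assumes "f \<in> borel_measurable M" "g \<in> borel_measurable M"
  shows "(\<lambda>x. f x *v g x) \<in> borel_measurable M"
  using borel_measurable_continuous_Pair[OF assms mv_cont] by simp

lemma sum_collapse: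
  assumes part: "Delta_partition Om D N P" and i: "i < N" and s: "s \<in> P i"
  shows "(\<Sum>k<N. indicator (P k) s *\<^sub>R c k) = (c i :: 'b::real_vector)"
proof -
  have "(\<Sum>k<N. indicator (P k) s *\<^sub>R c k) = (\<Sum>k\<in>{i}. indicator (P k) s *\<^sub>R c k)"
  proof (rule sum.mono_neutral_cong_right)
    show "{i} \<subseteq> {..<N}" using i by auto
    show "\<forall>j\<in>{..<N} - {i}. indicator (P j) s *\<^sub>R c j = 0"
    proof
      fix j assume j: "j \<in> {..<N} - {i}"
      then have "P i \<inter> P j = {}" using i part unfolding Delta_partition_def by auto
      then show "indicator (P j) s *\<^sub>R c j = 0" using s by (auto simp: indicator_def)
    qed
  qed auto
  then show ?thesis using s by simp
qed

lemma xg_bound: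
  fixes n g p :: real
  assumes "p > 1" "g > 0" "n \<ge> 0"
  shows "(if n \<le> g then 0 else n) \<le> n powr p / g powr (p - 1)"
proof (cases "n \<le> g")
  case True then show ?thesis using assms by simp
next
  case False
  then have n: "n > g" by simp
  have "g powr (p - 1) \<le> n powr (p - 1)" using assms n by (intro powr_mono2) auto
  then have "n * g powr (p - 1) \<le> n * n powr (p - 1)" using n assms by (intro mult_left_mono) auto
  also have "\<dots> = n powr p" using n assms powr_add[of n 1 "p - 1"] by simp
  finally show ?thesis using False assms by (simp add: field_simps)
qed

lemma cell_construction:
  fixes Om :: "'k::euclidean_space set" and x :: "'k \<Rightarrow> real^'n"
  assumes Om: "compact Om" and pq: "p > 1" "1 / p + 1 / q = 1" and r: "r > 0"
    and gamma: "gamma > 0" and a: "a \<ge> 1"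
    and part: "Delta_partition Om D N P" and net: "sigma_net (sphere 0 1) sg Es"
    and x: "x \<in> Lp_ball p Om r"
  defines "xg \<equiv> (\<lambda>s. if norm (x s) \<le> gamma then x s else 0)"
  shows "\<exists>y v z l. y \<in> disc_ball p Om r N P gamma a Es \<and>
     (\<forall>i<N. \<forall>s\<in>P i. y s = z i *\<^sub>R l i) \<and>
     (\<forall>i<N. measure lebesgue (P i) *\<^sub>R v i = (\<integral>s. indicator (P i) s *\<^sub>R xg s \<partial>lebesgue_on Om)) \<and>
     (\<forall>i<N. measure lebesgue (P i) * norm (v i) \<le> (\<integral>s. indicator (P i) s * norm (xg s) \<partial>lebesgue_on Om)) \<and>
     (\<forall>i<N. norm (v i - z i *\<^sub>R l i) \<le> gamma / real a + gamma * sg)"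
proof -
  have Oms: "Om \<in> sets lebesgue" using Om by (simp add: borel_compact)
  interpret fin: finite_measure "lebesgue_on Om"
    using Om by (intro finite_measure_lebesgue_on lmeasurable_compact)
  have q: "q > 1"
  proof -
    have "1/q = 1 - 1/p" using pq by simp
    moreover have "1/p > 0" "1/p < 1" using pq by auto
    ultimately have "1/q > 0" "1/q < 1" by auto
    then have "q > 0" by simp
    with \<open>1/q < 1\<close> show "q > 1" by (simp add: divide_less_eq_1_pos)
  qed
  have xm: "x \<in> borel_measurable (lebesgue_on Om)"
    and xpi: "integrable (lebesgue_on Om) (\<lambda>s. norm (x s) powr p)"
    and xn: "Lp_norm p Om x \<le> r"
    using x unfolding Lp_ball_def Lp_space_def by auto
  have xpr: "(\<integral>s. norm (x s) powr p \<partial>lebesgue_on Om) \<le> r powr p"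
  proof -
    let ?I = "(\<integral>s. norm (x s) powr p \<partial>lebesgue_on Om)"
    have I0: "?I \<ge> 0" by (simp add: integral_nonneg_AE)
    have "?I = (?I powr (1/p)) powr p" using I0 pq by (simp add: powr_powr)
    also have "\<dots> \<le> r powr p" using xn pq unfolding Lp_norm_def by (intro powr_mono2) auto
    finally show ?thesis .
  qed
  have xgm: "xg \<in> borel_measurable (lebesgue_on Om)" unfolding xg_def using xm by measurable
  have xgb: "norm (xg s) \<le> gamma" for s unfolding xg_def using gamma by auto
  have xgx: "norm (xg s) \<le> norm (x s)" for s unfolding xg_def by auto
  define mu where "mu i = measure lebesgue (P i)" for i
  have mu0: "mu i \<ge> 0" for i by (simp add: mu_def)
  have ind_m: "i < N \<Longrightarrow> indicator (P i) \<in> borel_measurable (lebesgue_on Om)" for i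
    using part_sets(3)[OF part] by (intro borel_measurable_indicator) auto
  have int_ind: "(\<integral>s. indicator (P i) s \<partial>lebesgue_on Om) = mu i" if "i < N" for i
    using int_indicator_on[OF Om part that] by (simp add: mu_def)
  define Iv where "Iv i = (\<integral>s. indicator (P i) s *\<^sub>R xg s \<partial>lebesgue_on Om)" for i
  define Ni where "Ni i = (\<integral>s. indicator (P i) s * norm (xg s) \<partial>lebesgue_on Om)" for i
  have Iv_int: "integrable (lebesgue_on Om) (\<lambda>s. indicator (P i) s *\<^sub>R xg s)" if "i < N" for i
  proof (rule fin.integrable_const_bound[where B=gamma])
    show "AE s in lebesgue_on Om. norm (indicator (P i) s *\<^sub>R xg s) \<le> gamma"
      using xgb gamma by (intro AE_I2) (auto simp: indicator_def)
    show "(\<lambda>s. indicator (P i) s *\<^sub>R xg s) \<in> borel_measurable (lebesgue_on Om)"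
      using ind_m[OF that] xgm by measurable
  qed
  have Ni_int: "integrable (lebesgue_on Om) (\<lambda>s. indicator (P i) s * norm (xg s))" if "i < N" for i
  proof (rule fin.integrable_const_bound[where B=gamma])
    show "AE s in lebesgue_on Om. norm (indicator (P i) s * norm (xg s)) \<le> gamma"
      using xgb gamma by (intro AE_I2) (auto simp: indicator_def)
    show "(\<lambda>s. indicator (P i) s * norm (xg s)) \<in> borel_measurable (lebesgue_on Om)"
      using ind_m[OF that] xgm by measurable
  qed
  have ind_int: "integrable (lebesgue_on Om) (indicator (P i) :: 'k \<Rightarrow> real)" if "i < N" for i
  proof (rule fin.integrable_const_bound[where B=1])
    show "AE s in lebesgue_on Om. norm (indicator (P i) s :: real) \<le> 1"
      by (intro AE_I2) (auto simp: indicator_def)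
  qed (rule ind_m[OF that])
  have Iv_Ni: "norm (Iv i) \<le> Ni i" if "i < N" for i
    unfolding Iv_def Ni_def using Iv_int[OF that] Ni_int[OF that]
    by (intro Bochner_Integration.integral_norm_bound_integral) (auto simp: indicator_def)
  have Ni_mu: "Ni i \<le> gamma * mu i" if "i < N" for i
  proof -
    have gi: "integrable (lebesgue_on Om) (\<lambda>s. gamma * indicator (P i) s)"
      using ind_int[OF that] by simp
    have "Ni i \<le> (\<integral>s. gamma * indicator (P i) s \<partial>lebesgue_on Om)"
      unfolding Ni_def using xgb
      by (intro integral_mono[OF Ni_int[OF that] gi]) (auto simp: indicator_def)
    also have "\<dots> = gamma * mu i" using int_ind[OF that] by simp
    finally show ?thesis .
  qed
  define v where "v i = (if mu i = 0 then 0 else (1 / mu i) *\<^sub>R Iv i)" for i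
  have v_Iv: "mu i *\<^sub>R v i = Iv i" if "i < N" for i
  proof (cases "mu i = 0")
    case True
    then have "Ni i \<le> 0" using Ni_mu[OF that] by simp
    then have "norm (Iv i) \<le> 0" using Iv_Ni[OF that] by linarith
    then show ?thesis using True by (simp add: v_def)
  qed (simp add: v_def)
  have v_Ni: "mu i * norm (v i) \<le> Ni i" if "i < N" for i
  proof -
    have "mu i * norm (v i) = norm (mu i *\<^sub>R v i)" using mu0 by simp
    then show ?thesis using v_Iv[OF that] Iv_Ni[OF that] by simp
  qed
  have v_gamma: "norm (v i) \<le> gamma" if "i < N" for i
  proof (cases "mu i = 0")
    case False
    then have "mu i > 0" using mu0[of i] by (simp add: order_less_le)
    have "mu i * norm (v i) \<le> mu i * gamma" using v_Ni[OF that] Ni_mu[OF that] by (simp add: mult.commute)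
    then show ?thesis using \<open>mu i > 0\<close> by simp
  qed (use gamma in \<open>simp add: v_def\<close>)
  define Ai where "Ai i = (\<integral>s. indicator (P i) s * norm (x s) powr p \<partial>lebesgue_on Om)" for i
  have Ai_int: "integrable (lebesgue_on Om) (\<lambda>s. indicator (P i) s * norm (x s) powr p)" if "i < N" for i
  proof (rule Bochner_Integration.integrable_bound[OF xpi])
    show "(\<lambda>s. indicator (P i) s * norm (x s) powr p) \<in> borel_measurable (lebesgue_on Om)"
      using ind_m[OF that] xm by measurable
    show "AE s in lebesgue_on Om. norm (indicator (P i) s * norm (x s) powr p) \<le> norm (norm (x s) powr p)"
      by (intro AE_I2) (auto simp: indicator_def)
  qed
  have jensen: "mu i * norm (v i) powr p \<le> Ai i" if i: "i < N" for i
  proof (cases "mu i = 0")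
    case True
    have "Ai i \<ge> 0" unfolding Ai_def by (intro integral_nonneg_AE) (auto simp: indicator_def)
    then show ?thesis using True by simp
  next
    case False
    then have mup: "mu i > 0" using mu0[of i] by (simp add: order_less_le)
    let ?f = "\<lambda>s. indicator (P i) s * norm (xg s)"
    let ?g = "\<lambda>s. indicator (P i) s :: real"
    have fp: "?f s powr p = indicator (P i) s * norm (xg s) powr p" for s
      by (simp add: indicator_def)
    have gq: "?g s powr q = indicator (P i) s" for s
      by (simp add: indicator_def)
    have fpi: "integrable (lebesgue_on Om) (\<lambda>s. ?f s powr p)"
    proof (rule Bochner_Integration.integrable_bound[OF Ai_int[OF i]])
      show "(\<lambda>s. ?f s powr p) \<in> borel_measurable (lebesgue_on Om)"
        using ind_m[OF i] xgm by measurable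
      show "AE s in lebesgue_on Om. norm (?f s powr p) \<le> norm (indicator (P i) s * norm (x s) powr p)"
        using xgx pq by (intro AE_I2) (auto simp: indicator_def intro!: powr_mono2)
    qed
    have gqi: "integrable (lebesgue_on Om) (\<lambda>s. ?g s powr q)"
      using ind_int[OF i] by (simp add: gq)
    have H: "(\<integral>s. ?f s * ?g s \<partial>lebesgue_on Om) \<le>
        (\<integral>s. ?f s powr p \<partial>lebesgue_on Om) powr (1/p) * (\<integral>s. ?g s powr q \<partial>lebesgue_on Om) powr (1/q)"
    proof (rule holder(2)[OF pq _ _ fpi _ _ gqi])
      show "?f \<in> borel_measurable (lebesgue_on Om)" using ind_m[OF i] xgm by measurable
      show "?g \<in> borel_measurable (lebesgue_on Om)" using ind_m[OF i] by simp
    qed (auto simp: indicator_def)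
    have e1: "(\<integral>s. ?f s * ?g s \<partial>lebesgue_on Om) = Ni i"
      unfolding Ni_def by (rule Bochner_Integration.integral_cong[OF refl]) (simp add: indicator_def)
    have e2: "(\<integral>s. ?g s powr q \<partial>lebesgue_on Om) = mu i"
      using int_ind[OF i] by (simp add: gq)
    have e3: "(\<integral>s. ?f s powr p \<partial>lebesgue_on Om) \<le> Ai i"
      unfolding Ai_def using fpi Ai_int[OF i] xgx pq
      by (intro integral_mono) (auto simp: indicator_def intro!: powr_mono2)
    have A0: "(\<integral>s. ?f s powr p \<partial>lebesgue_on Om) \<ge> 0" by (intro integral_nonneg_AE) auto
    have "mu i * norm (v i) \<le> Ai i powr (1/p) * mu i powr (1/q)"
    proof -
      have "mu i * norm (v i) \<le> Ni i" by (rule v_Ni[OF i])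
      also have "\<dots> \<le> (\<integral>s. ?f s powr p \<partial>lebesgue_on Om) powr (1/p) * mu i powr (1/q)"
        using H e1 e2 by simp
      also have "\<dots> \<le> Ai i powr (1/p) * mu i powr (1/q)"
        using e3 A0 pq by (intro mult_right_mono powr_mono2) auto
      finally show ?thesis .
    qed
    then have "(mu i * norm (v i)) powr p \<le> (Ai i powr (1/p) * mu i powr (1/q)) powr p"
      using mup pq by (intro powr_mono2) auto
    moreover have "(mu i * norm (v i)) powr p = mu i powr p * norm (v i) powr p"
      using mup by (simp add: powr_mult)
    moreover have "(Ai i powr (1/p) * mu i powr (1/q)) powr p = Ai i * mu i powr (p - 1)"
    proof -
      have Ai0: "Ai i \<ge> 0" unfolding Ai_def by (intro integral_nonneg_AE) (auto simp: indicator_def)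
      have "p / q = p - 1" using pq by (simp add: field_simps)
      then show ?thesis using Ai0 mup pq by (simp add: powr_mult powr_powr)
    qed
    ultimately have "mu i powr p * norm (v i) powr p \<le> Ai i * mu i powr (p - 1)" by simp
    moreover have "mu i powr p = mu i * mu i powr (p - 1)"
      using mup powr_add[of "mu i" 1 "p - 1"] by simp
    ultimately have "mu i powr (p - 1) * (mu i * norm (v i) powr p) \<le> mu i powr (p - 1) * Ai i"
      by (simp add: algebra_simps)
    then show ?thesis using mup by simp
  qed
  define e0 :: "real^'n" where "e0 = axis undefined 1"
  define u where "u i = (if v i = 0 then e0 else (1 / norm (v i)) *\<^sub>R v i)" for i
  have u1: "u i \<in> sphere 0 1" for i by (simp add: u_def e0_def)
  have vu: "v i = norm (v i) *\<^sub>R u i" for i by (simp add: u_def)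
  have "\<forall>i. \<exists>e\<in>Es. dist (u i) e \<le> sg"
    using net u1 unfolding sigma_net_def by blast
  then obtain l where lE: "\<And>i. l i \<in> Es" and ld: "\<And>i. dist (u i) (l i) \<le> sg"
    by metis
  have l1: "norm (l i) = 1" for i
  proof -
    have "l i \<in> sphere 0 1" using lE[of i] net unfolding sigma_net_def by blast
    then show ?thesis by simp
  qed
  have sg0: "sg \<ge> 0" using ld[of 0] zero_le_dist order_trans by blast
  define j where "j i = nat \<lfloor>norm (v i) * real a / gamma\<rfloor>" for i
  define z where "z i = real (j i) * gamma / real a" for i
  have a0: "real a > 0" using a by simp
  have zfacts: "0 \<le> z i \<and> z i \<le> norm (v i) \<and> norm (v i) - z i \<le> gamma / real a" for i
  proof -
    define t where "t = norm (v i) * real a / gamma"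
    have t0: "t \<ge> 0" using gamma a0 by (simp add: t_def)
    have jt: "real (j i) = of_int \<lfloor>t\<rfloor>" using t0 by (simp add: j_def t_def)
    have f1: "of_int \<lfloor>t\<rfloor> \<le> t" by (rule of_int_floor_le)
    have f2: "t - 1 < of_int \<lfloor>t\<rfloor>" by linarith
    have f0: "0 \<le> (of_int \<lfloor>t\<rfloor> :: real)" using t0 by simp
    have zt: "z i = of_int \<lfloor>t\<rfloor> * gamma / real a" by (simp add: z_def jt)
    have nv: "norm (v i) = t * gamma / real a" using gamma a0 by (simp add: t_def)
    show ?thesis
    proof (intro conjI)
      show "0 \<le> z i" using f0 gamma a0 by (simp add: zt)
      show "z i \<le> norm (v i)" unfolding zt nv using f1 gamma a0
        by (intro divide_right_mono mult_right_mono) auto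
      have "norm (v i) - z i = (t - of_int \<lfloor>t\<rfloor>) * gamma / real a" unfolding zt nv
        using a0 by (simp add: diff_divide_distrib left_diff_distrib)
      also have "\<dots> \<le> 1 * gamma / real a"
      proof -
        have f3: "t - of_int \<lfloor>t\<rfloor> \<le> 1" using f2 by linarith
        show ?thesis using f3 gamma a0 by (intro divide_right_mono mult_right_mono) auto
      qed
      finally show "norm (v i) - z i \<le> gamma / real a" by simp
    qed
  qed
  have ja: "j i \<le> a" if "i < N" for i
  proof -
    have "norm (v i) * real a / gamma \<le> real a"
      using v_gamma[OF that] gamma a0 by (simp add: field_simps mult_right_mono)
    then have "\<lfloor>norm (v i) * real a / gamma\<rfloor> \<le> int a" by linarith
    then show ?thesis unfolding j_def by (simp add: nat_le_iff)
  qed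
  have vz: "norm (v i - z i *\<^sub>R l i) \<le> gamma / real a + gamma * sg" if "i < N" for i
  proof -
    have "v i - z i *\<^sub>R l i = (norm (v i) - z i) *\<^sub>R u i + z i *\<^sub>R (u i - l i)"
      by (subst vu) (simp add: algebra_simps)
    then have "norm (v i - z i *\<^sub>R l i) \<le> norm ((norm (v i) - z i) *\<^sub>R u i) + norm (z i *\<^sub>R (u i - l i))"
      by (metis norm_triangle_ineq)
    also have "norm ((norm (v i) - z i) *\<^sub>R u i) = norm (v i) - z i"
      using zfacts[of i] u1[of i] by simp
    also have "norm (z i *\<^sub>R (u i - l i)) = z i * dist (u i) (l i)"
      using zfacts[of i] by (simp add: dist_norm)
    also have "z i * dist (u i) (l i) \<le> gamma * sg"
      using zfacts[of i] v_gamma[OF that] ld[of i] sg0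
      by (intro mult_mono) auto
    finally show ?thesis using zfacts[of i] by linarith
  qed
  define y where "y s = (if s \<in> Om then (\<Sum>i<N. indicator (P i) s *\<^sub>R (z i *\<^sub>R l i)) else 0)" for s
  have yP: "\<forall>i<N. \<forall>s\<in>P i. y s = z i *\<^sub>R l i"
  proof (intro allI impI ballI)
    fix i s assume i: "i < N" and s: "s \<in> P i"
    then have "s \<in> Om" using part_sets(2)[OF part i] by auto
    then have "y s = (\<Sum>k<N. indicator (P k) s *\<^sub>R (z k *\<^sub>R l k))"
      unfolding y_def by (rule if_P)
    also have "\<dots> = z i *\<^sub>R l i" by (rule sum_collapse[OF part i s])
    finally show "y s = z i *\<^sub>R l i" .
  qed
  have ydisc: "y \<in> disc_ball p Om r N P gamma a Es"
  proof -
    have A: "\<forall>xi. xi \<notin> Om \<longrightarrow> y xi = 0" by (simp add: y_def)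
    have B: "\<forall>i<N. j i \<le> a \<and> l i \<in> Es \<and> (\<forall>xi\<in>P i. y xi = (real (j i) * gamma / real a) *\<^sub>R l i)"
      using ja lE yP by (simp add: z_def)
    have "(\<Sum>i<N. measure lebesgue (P i) * (real (j i) * gamma / real a) powr p) \<le> (\<Sum>i<N. Ai i)"
    proof (rule sum_mono)
      fix i assume "i \<in> {..<N}"
      then have i: "i < N" by simp
      have "mu i * z i powr p \<le> mu i * norm (v i) powr p"
        using zfacts[of i] mu0[of i] pq by (intro mult_left_mono powr_mono2) auto
      also have "\<dots> \<le> Ai i" by (rule jensen[OF i])
      finally show "measure lebesgue (P i) * (real (j i) * gamma / real a) powr p \<le> Ai i"
        by (simp add: mu_def z_def)
    qed
    also have "(\<Sum>i<N. Ai i) = (\<integral>s. (\<Sum>i<N. indicator (P i) s * norm (x s) powr p) \<partial>lebesgue_on Om)"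
      unfolding Ai_def using Ai_int by (subst Bochner_Integration.integral_sum) auto
    also have "\<dots> = (\<integral>s. norm (x s) powr p \<partial>lebesgue_on Om)"
    proof (rule Bochner_Integration.integral_cong[OF refl])
      fix s assume "s \<in> space (lebesgue_on Om)"
      then have s: "s \<in> Om" by simp
      show "(\<Sum>i<N. indicator (P i) s * norm (x s) powr p) = norm (x s) powr p"
        using partition_unity[OF part s] by (simp add: sum_distrib_right[symmetric])
    qed
    also have "\<dots> \<le> r powr p" by (rule xpr)
    finally have C: "(\<Sum>i<N. measure lebesgue (P i) * (real (j i) * gamma / real a) powr p) \<le> r powr p" .
    show ?thesis unfolding disc_ball_def using A B C by blast
  qed
  show ?thesis
  proof (intro exI conjI)
    show "y \<in> disc_ball p Om r N P gamma a Es" by (rule ydisc)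
    show "\<forall>i<N. \<forall>s\<in>P i. y s = z i *\<^sub>R l i" by (rule yP)
    show "\<forall>i<N. measure lebesgue (P i) *\<^sub>R v i = (\<integral>s. indicator (P i) s *\<^sub>R xg s \<partial>lebesgue_on Om)"
      using v_Iv by (simp add: mu_def Iv_def)
    show "\<forall>i<N. measure lebesgue (P i) * norm (v i) \<le> (\<integral>s. indicator (P i) s * norm (xg s) \<partial>lebesgue_on Om)"
      using v_Ni by (simp add: mu_def Ni_def)
    show "\<forall>i<N. norm (v i - z i *\<^sub>R l i) \<le> gamma / real a + gamma * sg"
      using vz by simp
  qed
qed

lemma x_L1:
  fixes Om :: "'k::euclidean_space set" and x :: "'k \<Rightarrow> 'b::euclidean_space"
  assumes Om: "compact Om" and pq: "p > 1" "1 / p + 1 / q = 1" and x: "x \<in> Lp_ball p Om r"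
  shows "integrable (lebesgue_on Om) (\<lambda>s. norm (x s))"
    "(\<integral>s. norm (x s) \<partial>lebesgue_on Om) \<le> measure lebesgue Om powr (1/q) * r"
    "integrable (lebesgue_on Om) (\<lambda>s. norm (x s) powr p)"
    "(\<integral>s. norm (x s) powr p \<partial>lebesgue_on Om) \<le> r powr p"
    "x \<in> borel_measurable (lebesgue_on Om)"
proof -
  have Oms: "Om \<in> sets lebesgue" using Om by (simp add: borel_compact)
  interpret fin: finite_measure "lebesgue_on Om"
    using Om by (intro finite_measure_lebesgue_on lmeasurable_compact)
  show xm: "x \<in> borel_measurable (lebesgue_on Om)"
    and xpi: "integrable (lebesgue_on Om) (\<lambda>s. norm (x s) powr p)"
    using x unfolding Lp_ball_def Lp_space_def by auto
  have xn: "Lp_norm p Om x \<le> r" using x unfolding Lp_ball_def by auto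
  let ?I = "(\<integral>s. norm (x s) powr p \<partial>lebesgue_on Om)"
  have I0: "?I \<ge> 0" by (simp add: integral_nonneg_AE)
  have r0: "r \<ge> 0" using xn I0 unfolding Lp_norm_def by (metis order_trans powr_ge_zero)
  have "?I = (?I powr (1/p)) powr p" using I0 pq by (simp add: powr_powr)
  also have "\<dots> \<le> r powr p" using xn pq unfolding Lp_norm_def by (intro powr_mono2) auto
  finally show xpr: "?I \<le> r powr p" .
  have ci: "integrable (lebesgue_on Om) (\<lambda>s. (1::real) powr q)" by simp
  have nm: "(\<lambda>s. norm (x s)) \<in> borel_measurable (lebesgue_on Om)" using xm by measurable
  note H = holder[OF pq nm _ xpi _ _ ci]
  show "integrable (lebesgue_on Om) (\<lambda>s. norm (x s))" using H(1) by simp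
  have "(\<integral>s. norm (x s) \<partial>lebesgue_on Om) \<le> ?I powr (1/p) * (\<integral>s. (1::real) powr q \<partial>lebesgue_on Om) powr (1/q)"
    using H(2) by simp
  also have "(\<integral>s. (1::real) powr q \<partial>lebesgue_on Om) = measure lebesgue Om"
    using Oms by (simp add: measure_restrict_space)
  also have "?I powr (1/p) * measure lebesgue Om powr (1/q) \<le> r * measure lebesgue Om powr (1/q)"
    using xn unfolding Lp_norm_def by (intro mult_right_mono) auto
  finally show "(\<integral>s. norm (x s) \<partial>lebesgue_on Om) \<le> measure lebesgue Om powr (1/q) * r"
    by (simp add: mult.commute)
qed

lemma pointwise_bound:
  fixes Om :: "'k::euclidean_space set" and x y :: "'k \<Rightarrow> real^'n"
    and K :: "'k \<Rightarrow> real^'n^'m" and v c :: "nat \<Rightarrow> real^'n"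
  assumes Om: "compact Om" and pq: "p > 1" "1 / p + 1 / q = 1"
    and gamma: "gamma > 0"
    and part: "Delta_partition Om D N P" and x: "x \<in> Lp_ball p Om r"
    and xg_def: "xg = (\<lambda>s. if norm (x s) \<le> gamma then x s else 0)"
    and yP: "\<forall>i<N. \<forall>s\<in>P i. y s = c i"
    and vI: "\<forall>i<N. measure lebesgue (P i) *\<^sub>R v i = (\<integral>s. indicator (P i) s *\<^sub>R xg s \<partial>lebesgue_on Om)"
    and vN: "\<forall>i<N. measure lebesgue (P i) * norm (v i) \<le> (\<integral>s. indicator (P i) s * norm (xg s) \<partial>lebesgue_on Om)"
    and vz: "\<forall>i<N. norm (v i - c i) \<le> B0"
    and Km: "K \<in> borel_measurable (lebesgue_on Om)"
    and Kb: "\<And>s. s \<in> Om \<Longrightarrow> norm (K s) \<le> Mx"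
    and Kw: "\<And>s1 s2. s1 \<in> Om \<Longrightarrow> s2 \<in> Om \<Longrightarrow> norm (s2 - s1) \<le> D \<Longrightarrow> norm (K s2 - K s1) \<le> W"
    and W0: "W \<ge> 0" and Mx0: "Mx \<ge> 0"
  shows "norm (\<integral>s. K s *v (x s - y s) \<partial>lebesgue_on Om) \<le>
     Mx * r powr p / gamma powr (p - 1) + 2 * W * (measure lebesgue Om powr (1/q) * r) + Mx * measure lebesgue Om * B0"
proof -
  let ?L = "lebesgue_on Om"
  have Oms: "Om \<in> sets lebesgue" using Om by (simp add: borel_compact)
  interpret fin: finite_measure "lebesgue_on Om"
    using Om by (intro finite_measure_lebesgue_on lmeasurable_compact)
  note xL = x_L1[OF Om pq x]
  have xm: "x \<in> borel_measurable ?L" by (rule xL(5))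
  have xgm: "xg \<in> borel_measurable ?L" unfolding xg_def using xm by measurable
  have xgb: "norm (xg s) \<le> gamma" for s unfolding xg_def using gamma by auto
  have xgx: "norm (xg s) \<le> norm (x s)" for s unfolding xg_def by auto
  define mu where "mu i = measure lebesgue (P i)" for i
  have mu0: "mu i \<ge> 0" for i by (simp add: mu_def)
  have ind_m: "i < N \<Longrightarrow> indicator (P i) \<in> borel_measurable ?L" for i
    using part_sets(3)[OF part] by (intro borel_measurable_indicator) auto
  have int_ind: "(\<integral>s. indicator (P i) s \<partial>?L) = mu i" if "i < N" for i
    using int_indicator_on[OF Om part that] by (simp add: mu_def)
  have ind_int: "integrable ?L (indicator (P i) :: 'k \<Rightarrow> real)" if "i < N" for i
  proof (rule fin.integrable_const_bound[where B=1])
    show "AE s in ?L. norm (indicator (P i) s :: real) \<le> 1"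
      by (intro AE_I2) (auto simp: indicator_def)
  qed (rule ind_m[OF that])
  define Ni where "Ni i = (\<integral>s. indicator (P i) s * norm (xg s) \<partial>?L)" for i
  have Ni_int: "integrable ?L (\<lambda>s. indicator (P i) s * norm (xg s))" if "i < N" for i
  proof (rule fin.integrable_const_bound[where B=gamma])
    show "AE s in ?L. norm (indicator (P i) s * norm (xg s)) \<le> gamma"
      using xgb gamma by (intro AE_I2) (auto simp: indicator_def)
    show "(\<lambda>s. indicator (P i) s * norm (xg s)) \<in> borel_measurable ?L"
      using ind_m[OF that] xgm by measurable
  qed
  have Ni0: "Ni i \<ge> 0" for i unfolding Ni_def by (intro integral_nonneg_AE) (auto simp: indicator_def)
  define f0 where "f0 s = K s *v (x s - xg s)" for s
  have f0m: "f0 \<in> borel_measurable ?L" unfolding f0_def using Km xm xgm by measurable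
  have f0b: "norm (f0 s) \<le> Mx * (norm (x s) powr p / gamma powr (p - 1))" if s: "s \<in> Om" for s
  proof -
    have a1: "norm (f0 s) \<le> norm (K s) * norm (x s - xg s)" unfolding f0_def by (rule norm_mv)
    have "norm (x s - xg s) = (if norm (x s) \<le> gamma then 0 else norm (x s))"
      by (simp add: xg_def)
    also have "\<dots> \<le> norm (x s) powr p / gamma powr (p - 1)"
      by (rule xg_bound[OF pq(1) gamma norm_ge_zero])
    finally have a2: "norm (x s - xg s) \<le> norm (x s) powr p / gamma powr (p - 1)" .
    have a3: "norm (K s) * norm (x s - xg s) \<le> Mx * (norm (x s) powr p / gamma powr (p - 1))"
      by (rule mult_mono[OF Kb[OF s] a2]) (auto intro: order_trans[OF norm_ge_zero Kb[OF s]])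
    show ?thesis using a1 a3 by linarith
  qed
  have bi0: "integrable ?L (\<lambda>s. Mx * (norm (x s) powr p / gamma powr (p - 1)))"
    using xL(3) by simp
  have f0i: "integrable ?L f0"
  proof (rule Bochner_Integration.integrable_bound[OF bi0 f0m], intro AE_I2 impI)
    fix s assume "s \<in> space ?L"
    then have s: "s \<in> Om" by simp
    show "norm (f0 s) \<le> norm (Mx * (norm (x s) powr p / gamma powr (p - 1)))"
      using f0b[OF s] by (metis abs_ge_self order_trans real_norm_def)
  qed
  have T0: "norm (\<integral>s. f0 s \<partial>?L) \<le> Mx * r powr p / gamma powr (p - 1)"
  proof -
    have "norm (\<integral>s. f0 s \<partial>?L) \<le> (\<integral>s. Mx * (norm (x s) powr p / gamma powr (p - 1)) \<partial>?L)"
      by (rule Bochner_Integration.integral_norm_bound_integral[OF f0i bi0]) (use f0b in auto)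
    also have "\<dots> = Mx / gamma powr (p - 1) * (\<integral>s. norm (x s) powr p \<partial>?L)"
      by simp
    also have "\<dots> \<le> Mx / gamma powr (p - 1) * r powr p"
      using xL(4) Mx0 gamma by (intro mult_left_mono) auto
    finally show ?thesis by simp
  qed
  define fc where "fc i s = indicator (P i) s *\<^sub>R (K s *v (xg s - c i))" for i s
  define gA where "gA i s = indicator (P i) s *\<^sub>R (K s *v (xg s - v i))" for i s
  define gB where "gB i s = indicator (P i) s *\<^sub>R (K s *v (v i - c i))" for i s
  have bnd_int: "integrable ?L h" if hm: "h \<in> borel_measurable ?L"
    and hb: "\<And>s. s \<in> Om \<Longrightarrow> norm (h s) \<le> B" for h :: "'k \<Rightarrow> real^'m" and B
    by (rule fin.integrable_const_bound[where B=B, OF _ hm]) (use hb in \<open>auto intro!: AE_I2\<close>)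
  have bnd_int_r: "integrable ?L h" if hm: "h \<in> borel_measurable ?L"
    and hb: "\<And>s. s \<in> Om \<Longrightarrow> norm (h s) \<le> B" for h :: "'k \<Rightarrow> real" and B
    by (rule fin.integrable_const_bound[where B=B, OF _ hm]) (use hb in \<open>auto intro!: AE_I2\<close>)
  have Kw_b: "norm (K s *v w) \<le> Mx * norm w" if "s \<in> Om" for s w
    by (rule order_trans[OF norm_mv mult_right_mono[OF Kb[OF that] norm_ge_zero]])
  have gAi: "integrable ?L (gA i)" if i: "i < N" for i
  proof (rule bnd_int)
    show "gA i \<in> borel_measurable ?L" unfolding gA_def using ind_m[OF i] Km xgm by measurable
    fix s assume s: "s \<in> Om"
    have "norm (xg s - v i) \<le> gamma + norm (v i)"
      using norm_triangle_ineq4[of "xg s" "v i"] xgb[of s] by linarith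
    then have "norm (K s *v (xg s - v i)) \<le> Mx * (gamma + norm (v i))"
      using Kw_b[OF s, of "xg s - v i"] Mx0 by (meson mult_left_mono order_trans)
    then show "norm (gA i s) \<le> Mx * (gamma + norm (v i))"
      unfolding gA_def using Mx0 gamma by (auto simp: indicator_def)
  qed
  have gBi: "integrable ?L (gB i)" if i: "i < N" for i
  proof (rule bnd_int)
    show "gB i \<in> borel_measurable ?L" unfolding gB_def using ind_m[OF i] Km by measurable
    fix s assume s: "s \<in> Om"
    show "norm (gB i s) \<le> Mx * norm (v i - c i)"
      unfolding gB_def using Kw_b[OF s, of "v i - c i"] Mx0 by (auto simp: indicator_def)
  qed
  have fc_eq: "fc i s = gA i s + gB i s" for i s
    unfolding fc_def gA_def gB_def by (simp add: algebra_simps)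
  have fci: "integrable ?L (fc i)" if i: "i < N" for i
    unfolding fc_eq[abs_def] using gAi[OF i] gBi[OF i] by (rule Bochner_Integration.integrable_add)
  have TB: "norm (\<integral>s. gB i s \<partial>?L) \<le> Mx * B0 * mu i" if i: "i < N" for i
  proof -
    have ii: "integrable ?L (\<lambda>s. Mx * B0 * indicator (P i) s)" using ind_int[OF i] by simp
    have "norm (\<integral>s. gB i s \<partial>?L) \<le> (\<integral>s. Mx * B0 * indicator (P i) s \<partial>?L)"
    proof (rule Bochner_Integration.integral_norm_bound_integral[OF gBi[OF i] ii])
      fix s assume "s \<in> space ?L"
      then have s: "s \<in> Om" by simp
      have "norm (K s *v (v i - c i)) \<le> Mx * B0"
        using Kw_b[OF s, of "v i - c i"] vz i Mx0 by (meson mult_left_mono order_trans)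
      then show "norm (gB i s) \<le> Mx * B0 * indicator (P i) s"
        unfolding gB_def by (auto simp: indicator_def)
    qed
    also have "\<dots> = Mx * B0 * mu i" using int_ind[OF i] by simp
    finally show ?thesis .
  qed
  have vN': "mu i * norm (v i) \<le> Ni i" if "i < N" for i
    using vN that by (simp add: mu_def Ni_def)
  have TA: "norm (\<integral>s. gA i s \<partial>?L) \<le> 2 * W * Ni i" if i: "i < N" for i
  proof (cases "P i = {}")
    case True
    then have "(\<lambda>s. gA i s) = (\<lambda>s. 0)" by (auto simp: gA_def)
    then show ?thesis using W0 Ni0[of i] by simp
  next
    case False
    then obtain s0 where s0: "s0 \<in> P i" by blast
    have s0O: "s0 \<in> Om" using s0 part_sets(2)[OF part i] by auto
    have bP: "bounded (P i)"
      using part_sets(2)[OF part i] Om by (meson bounded_subset compact_imp_bounded)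
    have diam: "diameter (P i) \<le> D" using part i unfolding Delta_partition_def by auto
    define h1 where "h1 s = indicator (P i) s *\<^sub>R ((K s - K s0) *v (xg s - v i))" for s
    define h2 where "h2 s = indicator (P i) s *\<^sub>R (xg s - v i)" for s
    have gA_eq: "gA i s = h1 s + K s0 *v h2 s" for s
      unfolding gA_def h1_def h2_def by (simp add: algebra_simps)
    have h2i: "integrable ?L h2"
    proof -
      have a: "integrable ?L (\<lambda>s. indicator (P i) s *\<^sub>R xg s)"
      proof (rule fin.integrable_const_bound[where B=gamma])
        show "(\<lambda>s. indicator (P i) s *\<^sub>R xg s) \<in> borel_measurable ?L"
          using ind_m[OF i] xgm by measurable
        show "AE s in ?L. norm (indicator (P i) s *\<^sub>R xg s) \<le> gamma"
          using xgb gamma by (intro AE_I2) (auto simp: indicator_def)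
      qed
      have b: "integrable ?L (\<lambda>s. indicator (P i) s *\<^sub>R v i)"
        using ind_int[OF i] by simp
      show ?thesis unfolding h2_def using Bochner_Integration.integrable_diff[OF a b]
        by (simp add: algebra_simps)
    qed
    have h2_0: "(\<integral>s. h2 s \<partial>?L) = 0"
    proof -
      have a: "integrable ?L (\<lambda>s. indicator (P i) s *\<^sub>R xg s)"
      proof (rule fin.integrable_const_bound[where B=gamma])
        show "(\<lambda>s. indicator (P i) s *\<^sub>R xg s) \<in> borel_measurable ?L"
          using ind_m[OF i] xgm by measurable
        show "AE s in ?L. norm (indicator (P i) s *\<^sub>R xg s) \<le> gamma"
          using xgb gamma by (intro AE_I2) (auto simp: indicator_def)
      qed
      have "(\<integral>s. h2 s \<partial>?L) = (\<integral>s. indicator (P i) s *\<^sub>R xg s - indicator (P i) s *\<^sub>R v i \<partial>?L)"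
        unfolding h2_def by (simp add: algebra_simps)
      also have "\<dots> = (\<integral>s. indicator (P i) s *\<^sub>R xg s \<partial>?L) - (\<integral>s. indicator (P i) s *\<^sub>R v i \<partial>?L)"
        using a ind_int[OF i] by (intro Bochner_Integration.integral_diff) auto
      also have "(\<integral>s. indicator (P i) s *\<^sub>R v i \<partial>?L) = mu i *\<^sub>R v i"
        using int_ind[OF i] ind_int[OF i] by simp
      also have "(\<integral>s. indicator (P i) s *\<^sub>R xg s \<partial>?L) = mu i *\<^sub>R v i"
        using vI i by (simp add: mu_def)
      finally show ?thesis by simp
    qed
    have h1i: "integrable ?L h1"
    proof -
      have "integrable ?L (\<lambda>s. gA i s - K s0 *v h2 s)"
        using gAi[OF i] h2i by (intro Bochner_Integration.integrable_diff) (auto intro: integrable_bounded_linear)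
      then show ?thesis by (simp add: gA_eq)
    qed
    have int_K0: "(\<integral>s. K s0 *v h2 s \<partial>?L) = K s0 *v (\<integral>s. h2 s \<partial>?L)"
      by (rule integral_bounded_linear[OF matrix_vector_mul_bounded_linear h2i])
    have "(\<integral>s. gA i s \<partial>?L) = (\<integral>s. h1 s \<partial>?L) + (\<integral>s. K s0 *v h2 s \<partial>?L)"
      unfolding gA_eq using h1i h2i
      by (intro Bochner_Integration.integral_add) (auto intro: integrable_bounded_linear)
    also have "\<dots> = (\<integral>s. h1 s \<partial>?L)" using int_K0 h2_0 by simp
    finally have gA_h1: "(\<integral>s. gA i s \<partial>?L) = (\<integral>s. h1 s \<partial>?L)" .
    have ii: "integrable ?L (\<lambda>s. W * (indicator (P i) s * norm (xg s)) + W * norm (v i) * indicator (P i) s)"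
      using Ni_int[OF i] ind_int[OF i] by simp
    have "norm (\<integral>s. h1 s \<partial>?L) \<le> (\<integral>s. W * (indicator (P i) s * norm (xg s)) + W * norm (v i) * indicator (P i) s \<partial>?L)"
    proof (rule Bochner_Integration.integral_norm_bound_integral[OF h1i ii])
      fix s assume "s \<in> space ?L"
      then have s: "s \<in> Om" by simp
      show "norm (h1 s) \<le> W * (indicator (P i) s * norm (xg s)) + W * norm (v i) * indicator (P i) s"
      proof (cases "s \<in> P i")
        case True
        have "dist s s0 \<le> diameter (P i)" by (rule diameter_bounded_bound[OF bP True s0])
        then have "norm (s - s0) \<le> D" using diam by (simp add: dist_norm)
        then have kw: "norm (K s - K s0) \<le> W" by (rule Kw[OF s0O s])
        have "norm ((K s - K s0) *v (xg s - v i)) \<le> norm (K s - K s0) * norm (xg s - v i)"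
          by (rule norm_mv)
        also have "\<dots> \<le> W * norm (xg s - v i)" by (rule mult_right_mono[OF kw norm_ge_zero])
        also have "\<dots> \<le> W * (norm (xg s) + norm (v i))"
          by (rule mult_left_mono[OF norm_triangle_ineq4 W0])
        finally show ?thesis using True by (simp add: h1_def algebra_simps)
      qed (simp add: h1_def)
    qed
    also have "\<dots> = W * Ni i + W * norm (v i) * mu i"
      using Ni_int[OF i] ind_int[OF i] int_ind[OF i] by (simp add: Ni_def)
    also have "\<dots> \<le> W * Ni i + W * Ni i"
    proof -
      have "W * (mu i * norm (v i)) \<le> W * Ni i" by (rule mult_left_mono[OF vN'[OF i] W0])
      then show ?thesis by (simp add: mult_ac)
    qed
    finally show ?thesis using gA_h1 by simp
  qed
  have Tc: "norm (\<integral>s. fc i s \<partial>?L) \<le> 2 * W * Ni i + Mx * B0 * mu i" if i: "i < N" for i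
  proof -
    have "(\<integral>s. fc i s \<partial>?L) = (\<integral>s. gA i s \<partial>?L) + (\<integral>s. gB i s \<partial>?L)"
      unfolding fc_eq using gAi[OF i] gBi[OF i] by (rule Bochner_Integration.integral_add)
    then have e: "norm (\<integral>s. fc i s \<partial>?L) = norm ((\<integral>s. gA i s \<partial>?L) + (\<integral>s. gB i s \<partial>?L))" by simp
    show ?thesis using e TA[OF i] TB[OF i] norm_triangle_ineq[of "\<integral>s. gA i s \<partial>?L" "\<integral>s. gB i s \<partial>?L"]
      by linarith
  qed
  have decomp: "K s *v (x s - y s) = f0 s + (\<Sum>i<N. fc i s)" if s: "s \<in> Om" for s
  proof -
    have "K s *v (xg s - y s) = (\<Sum>i<N. indicator (P i) s *\<^sub>R (K s *v (xg s - c i)))"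
      by (rule pw_sum[OF part s, of "\<lambda>s. K s *v (xg s - y s)" "\<lambda>i s. K s *v (xg s - c i)"])
         (use yP in auto)
    moreover have "K s *v (x s - y s) = K s *v (x s - xg s) + K s *v (xg s - y s)"
      by (simp add: algebra_simps)
    ultimately show ?thesis by (simp add: f0_def fc_def)
  qed
  have sumi: "integrable ?L (\<lambda>s. \<Sum>i<N. fc i s)"
    using fci by (intro Bochner_Integration.integrable_sum) auto
  have "(\<integral>s. K s *v (x s - y s) \<partial>?L) = (\<integral>s. f0 s + (\<Sum>i<N. fc i s) \<partial>?L)"
    by (rule Bochner_Integration.integral_cong[OF refl]) (simp add: decomp)
  also have "\<dots> = (\<integral>s. f0 s \<partial>?L) + (\<integral>s. (\<Sum>i<N. fc i s) \<partial>?L)"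
    using f0i sumi by (rule Bochner_Integration.integral_add)
  also have "(\<integral>s. (\<Sum>i<N. fc i s) \<partial>?L) = (\<Sum>i<N. (\<integral>s. fc i s \<partial>?L))"
    using fci by (intro Bochner_Integration.integral_sum) auto
  finally have eq: "(\<integral>s. K s *v (x s - y s) \<partial>?L) = (\<integral>s. f0 s \<partial>?L) + (\<Sum>i<N. (\<integral>s. fc i s \<partial>?L))" .
  have "norm (\<Sum>i<N. (\<integral>s. fc i s \<partial>?L)) \<le> (\<Sum>i<N. norm (\<integral>s. fc i s \<partial>?L))"
    by (rule norm_sum)
  also have "\<dots> \<le> (\<Sum>i<N. 2 * W * Ni i + Mx * B0 * mu i)"
    using Tc by (intro sum_mono) auto
  also have "\<dots> = 2 * W * (\<Sum>i<N. Ni i) + Mx * B0 * (\<Sum>i<N. mu i)"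
    by (simp add: sum.distrib sum_distrib_left)
  finally have S: "norm (\<Sum>i<N. (\<integral>s. fc i s \<partial>?L)) \<le> 2 * W * (\<Sum>i<N. Ni i) + Mx * B0 * (\<Sum>i<N. mu i)" .
  have xgi: "integrable ?L (\<lambda>s. norm (xg s))"
  proof (rule fin.integrable_const_bound[where B=gamma])
    show "AE s in ?L. norm (norm (xg s)) \<le> gamma" using xgb by (intro AE_I2) auto
    show "(\<lambda>s. norm (xg s)) \<in> borel_measurable ?L" using xgm by measurable
  qed
  have sumN: "(\<Sum>i<N. Ni i) \<le> measure lebesgue Om powr (1/q) * r"
  proof -
    have "(\<Sum>i<N. Ni i) = (\<integral>s. (\<Sum>i<N. indicator (P i) s * norm (xg s)) \<partial>?L)"
      unfolding Ni_def using Ni_int by (subst Bochner_Integration.integral_sum) auto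
    also have "\<dots> = (\<integral>s. norm (xg s) \<partial>?L)"
    proof (rule Bochner_Integration.integral_cong[OF refl])
      fix s assume "s \<in> space ?L"
      then have s: "s \<in> Om" by simp
      show "(\<Sum>i<N. indicator (P i) s * norm (xg s)) = norm (xg s)"
        using partition_unity[OF part s] by (simp add: sum_distrib_right[symmetric])
    qed
    also have "\<dots> \<le> (\<integral>s. norm (x s) \<partial>?L)"
      using xgi xL(1) xgx by (intro integral_mono) auto
    also have "\<dots> \<le> measure lebesgue Om powr (1/q) * r" by (rule xL(2))
    finally show ?thesis .
  qed
  have sumM: "(\<Sum>i<N. mu i) = measure lebesgue Om"
  proof -
    have "(\<Sum>i<N. mu i) = (\<Sum>i<N. (\<integral>s. indicator (P i) s \<partial>?L))"
      using int_ind by simp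
    also have "\<dots> = (\<integral>s. (\<Sum>i<N. indicator (P i) s) \<partial>?L)"
      using ind_int by (subst Bochner_Integration.integral_sum) auto
    also have "\<dots> = (\<integral>s. 1 \<partial>?L)"
      by (rule Bochner_Integration.integral_cong[OF refl]) (simp add: partition_unity[OF part])
    also have "\<dots> = measure lebesgue Om"
      using Oms by (simp add: measure_restrict_space)
    finally show ?thesis .
  qed
  have "norm (\<integral>s. K s *v (x s - y s) \<partial>?L) \<le> norm (\<integral>s. f0 s \<partial>?L) + norm (\<Sum>i<N. (\<integral>s. fc i s \<partial>?L))"
    unfolding eq by (rule norm_triangle_ineq)
  also have "\<dots> \<le> Mx * r powr p / gamma powr (p - 1) + (2 * W * (measure lebesgue Om powr (1/q) * r) + Mx * B0 * measure lebesgue Om)"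
  proof (rule add_mono[OF T0])
    have "2 * W * (\<Sum>i<N. Ni i) \<le> 2 * W * (measure lebesgue Om powr (1/q) * r)"
      using sumN W0 by (intro mult_left_mono) auto
    then show "norm (\<Sum>i<N. (\<integral>s. fc i s \<partial>?L)) \<le> 2 * W * (measure lebesgue Om powr (1/q) * r) + Mx * B0 * measure lebesgue Om"
      using S sumM by simp
  qed
  finally show ?thesis by (simp add: algebra_simps)
qed

lemma nn_L_le_lborel:
  fixes Om :: "'k::euclidean_space set" and g :: "'k \<Rightarrow> ennreal"
  assumes Oms: "Om \<in> sets lebesgue"
  shows "(\<integral>\<^sup>+xi. g xi \<partial>lebesgue_on Om) \<le> (\<integral>\<^sup>+xi. g xi \<partial>lborel)"
proof -
  have "(\<integral>\<^sup>+xi. g xi \<partial>lebesgue_on Om) = (\<integral>\<^sup>+xi. g xi * indicator Om xi \<partial>lebesgue)"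
    using Oms by (simp add: nn_integral_restrict_space)
  also have "\<dots> = (\<integral>\<^sup>+xi. g xi * indicator Om xi \<partial>lborel)" by (rule nn_integral_completion)
  also have "\<dots> \<le> (\<integral>\<^sup>+xi. g xi \<partial>lborel)"
    by (intro nn_integral_mono) (auto simp: indicator_def)
  finally show ?thesis .
qed

lemma Lq_bound:
  fixes Om :: "'k::euclidean_space set" and u :: "'k \<Rightarrow> 'b::real_normed_vector"
    and kq :: "'k \<Rightarrow> ennreal"
  assumes Om: "compact Om" and q: "q > 1" and lam: "lam > 0" and r: "r > 0" and C: "C \<ge> 0"
    and kqm: "kq \<in> borel_measurable lborel"
    and kqI: "(\<integral>\<^sup>+xi. kq xi \<partial>lborel) = ennreal I0"
    and I0: "I0 \<le> (lam / (2 * r)) powr q"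
    and ae: "AE xi in lborel. xi \<in> Om \<longrightarrow> norm (u xi) \<le> 2 * r * enn2real (kq xi) powr (1/q) + C"
  shows "Lp_norm q Om u \<le> lam + C * measure lebesgue Om powr (1/q)"
proof -
  let ?L = "lebesgue_on Om"
  have Oms: "Om \<in> sets lebesgue" using Om by (simp add: borel_compact)
  have fin: "finite_measure ?L"
    using Om by (intro finite_measure_lebesgue_on lmeasurable_compact)
  have kqL: "kq \<in> borel_measurable ?L"
    using kqm by (intro measurable_restrict_space1 measurable_completion)
  define f where "f xi = 2 * r * enn2real (kq xi) powr (1/q)" for xi
  have fm: "f \<in> borel_measurable ?L" unfolding f_def using kqL by measurable
  have f0: "f xi \<ge> 0" for xi using r by (simp add: f_def)
  have fq: "f xi powr q = (2 * r) powr q * enn2real (kq xi)" for xi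
    using r q by (simp add: f_def powr_mult powr_powr)
  have ei: "integrable ?L (\<lambda>xi. enn2real (kq xi))"
  proof (rule integrableI_bounded)
    show "(\<lambda>xi. enn2real (kq xi)) \<in> borel_measurable ?L" using kqL by measurable
    have "(\<integral>\<^sup>+xi. ennreal (norm (enn2real (kq xi))) \<partial>?L) \<le> (\<integral>\<^sup>+xi. kq xi \<partial>?L)"
      by (intro nn_integral_mono) (simp add: ennreal_enn2real_if)
    also have "\<dots> \<le> (\<integral>\<^sup>+xi. kq xi \<partial>lborel)" by (rule nn_L_le_lborel[OF Oms])
    also have "\<dots> < \<infinity>" using kqI by simp
    finally show "(\<integral>\<^sup>+xi. ennreal (norm (enn2real (kq xi))) \<partial>?L) < \<infinity>" .
  qed
  have eI: "(\<integral>xi. enn2real (kq xi) \<partial>?L) \<le> (lam / (2 * r)) powr q"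
  proof -
    have "(\<integral>xi. enn2real (kq xi) \<partial>?L) = enn2real (\<integral>\<^sup>+xi. ennreal (enn2real (kq xi)) \<partial>?L)"
      using kqL by (intro integral_eq_nn_integral) auto
    also have "\<dots> \<le> enn2real (ennreal I0)"
    proof (rule enn2real_mono)
      have "(\<integral>\<^sup>+xi. ennreal (enn2real (kq xi)) \<partial>?L) \<le> (\<integral>\<^sup>+xi. kq xi \<partial>?L)"
        by (intro nn_integral_mono) (simp add: ennreal_enn2real_if)
      also have "\<dots> \<le> (\<integral>\<^sup>+xi. kq xi \<partial>lborel)" by (rule nn_L_le_lborel[OF Oms])
      finally show "(\<integral>\<^sup>+xi. ennreal (enn2real (kq xi)) \<partial>?L) \<le> ennreal I0" using kqI by simp
    qed simp
    also have "\<dots> \<le> (lam / (2 * r)) powr q"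
    proof (cases "I0 \<ge> 0")
      case False
      then have "ennreal I0 = 0" by (simp add: ennreal_neg)
      then show ?thesis by simp
    qed (use I0 in simp)
    finally show ?thesis .
  qed
  have fqi: "integrable ?L (\<lambda>xi. f xi powr q)" unfolding fq using ei by simp
  note MK = minkowski_const[OF q fin fm _ fqi C]
  have mu: "measure ?L (space ?L) = measure lebesgue Om"
    using Oms by (simp add: measure_restrict_space)
  have "(\<integral>xi. f xi powr q \<partial>?L) powr (1/q) = ((2 * r) powr q * (\<integral>xi. enn2real (kq xi) \<partial>?L)) powr (1/q)"
    unfolding fq by simp
  also have "\<dots> = 2 * r * (\<integral>xi. enn2real (kq xi) \<partial>?L) powr (1/q)"
    using r q by (simp add: powr_mult powr_powr integral_nonneg_AE)
  also have "\<dots> \<le> 2 * r * ((lam / (2 * r)) powr q) powr (1/q)"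
    using eI r q by (intro mult_left_mono powr_mono2) (auto intro: integral_nonneg_AE)
  also have "\<dots> = lam" using lam r q by (simp add: powr_powr)
  finally have fqb: "(\<integral>xi. f xi powr q \<partial>?L) powr (1/q) \<le> lam" .
  have MKb: "(\<integral>xi. (f xi + C) powr q \<partial>?L) powr (1/q) \<le> lam + C * measure lebesgue Om powr (1/q)"
    using MK(2) f0 fqb mu by force
  show ?thesis
  proof (cases "integrable ?L (\<lambda>xi. norm (u xi) powr q)")
    case False
    then have "Lp_norm q Om u = 0" unfolding Lp_norm_def by (simp add: not_integrable_integral_eq)
    then show ?thesis using lam C by simp
  next
    case True
    have aeL: "AE xi in ?L. norm (u xi) powr q \<le> (f xi + C) powr q"
    proof -
      have "AE xi in lebesgue. xi \<in> Om \<longrightarrow> norm (u xi) \<le> f xi + C"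
        using ae unfolding f_def by (rule AE_completion)
      then have "AE xi in ?L. norm (u xi) \<le> f xi + C"
        using Oms by (simp add: AE_restrict_space_iff)
      then show ?thesis
      proof (rule AE_mp, intro AE_I2 impI)
        fix xi assume "norm (u xi) \<le> f xi + C"
        then show "norm (u xi) powr q \<le> (f xi + C) powr q" using q by (intro powr_mono2) auto
      qed
    qed
    have "(\<integral>xi. norm (u xi) powr q \<partial>?L) \<le> (\<integral>xi. (f xi + C) powr q \<partial>?L)"
      using True MK(1) f0 aeL by (intro integral_mono_AE) auto
    then have "Lp_norm q Om u \<le> (\<integral>xi. (f xi + C) powr q \<partial>?L) powr (1/q)"
      unfolding Lp_norm_def using q by (intro powr_mono2) (auto intro: integral_nonneg_AE)
    then show ?thesis using MKb by linarith
  qed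
qed

lemma good_bound:
  fixes Om :: "'k::euclidean_space set" and x y :: "'k \<Rightarrow> real^'n"
    and K Kl :: "'k \<Rightarrow> 'k \<Rightarrow> real^'n^'m"
  assumes Om: "compact Om" and pq: "p > 1" "1 / p + 1 / q = 1"
    and x: "x \<in> Lp_ball p Om r" and y: "y \<in> Lp_ball p Om r"
    and Km: "(\<lambda>s. K xi s) \<in> borel_measurable (lebesgue_on Om)"
    and Klm: "(\<lambda>s. Kl xi s) \<in> borel_measurable (lebesgue_on Om)"
    and Klb: "\<And>s. s \<in> Om \<Longrightarrow> norm (Kl xi s) \<le> Mx"
    and nn: "(\<integral>\<^sup>+s. ennreal (norm (K xi s - Kl xi s) powr q) \<partial>lebesgue_on Om) = kx"
    and kfin: "kx \<noteq> \<infinity>"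
    and KlC: "norm (\<integral>s. Kl xi s *v (x s - y s) \<partial>lebesgue_on Om) \<le> C"
  shows "norm (HS_op Om K x xi - HS_op Om K y xi) \<le> 2 * r * enn2real kx powr (1/q) + C"
proof -
  let ?L = "lebesgue_on Om"
  have q: "q > 1"
  proof -
    have "1/q = 1 - 1/p" using pq by simp
    moreover have "1/p > 0" "1/p < 1" using pq by auto
    ultimately have "1/q > 0" "1/q < 1" by auto
    then have "q > 0" by simp
    with \<open>1/q < 1\<close> show "q > 1" by (simp add: divide_less_eq_1_pos)
  qed
  note xL = x_L1[OF Om pq x]
  note yL = x_L1[OF Om pq y]
  define g where "g s = norm (K xi s - Kl xi s)" for s
  have gm: "g \<in> borel_measurable ?L" unfolding g_def using Km Klm by measurable
  have g0: "g s \<ge> 0" for s by (simp add: g_def)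
  have kx: "kx = ennreal (enn2real kx)" using kfin by (simp add: less_top)
  have gqi: "integrable ?L (\<lambda>s. g s powr q)"
  proof (rule integrableI_nn_integral_finite)
    show "(\<lambda>s. g s powr q) \<in> borel_measurable ?L" using gm by measurable
    show "AE s in ?L. 0 \<le> g s powr q" by simp
    show "(\<integral>\<^sup>+s. ennreal (g s powr q) \<partial>?L) = ennreal (enn2real kx)"
      using nn kx by (simp add: g_def)
  qed
  have gqI: "(\<integral>s. g s powr q \<partial>?L) = enn2real kx"
  proof -
    have "(\<integral>s. g s powr q \<partial>?L) = enn2real (\<integral>\<^sup>+s. ennreal (g s powr q) \<partial>?L)"
      using gm by (intro integral_eq_nn_integral) auto
    then show ?thesis using nn by (simp add: g_def)
  qed
  have hold: "integrable ?L (\<lambda>s. norm (w s) * g s) \<and> (\<integral>s. norm (w s) * g s \<partial>?L) \<le> r * enn2real kx powr (1/q)"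
    if w: "w \<in> Lp_ball p Om r" for w :: "'k \<Rightarrow> real^'n"
  proof -
    note wL = x_L1[OF Om pq w]
    have nm: "(\<lambda>s. norm (w s)) \<in> borel_measurable ?L" using wL(5) by measurable
    note H = holder[OF pq nm _ wL(3) gm _ gqi]
    have "(\<integral>s. norm (w s) powr p \<partial>?L) powr (1/p) \<le> (r powr p) powr (1/p)"
      using wL(4) pq by (intro powr_mono2) (auto intro: integral_nonneg_AE)
    also have "\<dots> = r"
    proof -
      have "Lp_norm p Om w \<le> r" using w unfolding Lp_ball_def by auto
      then have "r \<ge> 0" unfolding Lp_norm_def by (metis order_trans powr_ge_zero)
      then show ?thesis using pq by (simp add: powr_powr)
    qed
    finally have a: "(\<integral>s. norm (w s) powr p \<partial>?L) powr (1/p) \<le> r" .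
    have "(\<integral>s. norm (w s) * g s \<partial>?L) \<le> (\<integral>s. norm (w s) powr p \<partial>?L) powr (1/p) * enn2real kx powr (1/q)"
      using H(2) gqI g0 by simp
    also have "\<dots> \<le> r * enn2real kx powr (1/q)"
      using a by (intro mult_right_mono) auto
    finally show ?thesis using H(1) g0 by simp
  qed
  note hx = hold[OF x] and hy = hold[OF y]
  have Ki: "integrable ?L (\<lambda>s. K xi s *v w s)" "integrable ?L (\<lambda>s. Kl xi s *v w s)"
    if w: "w \<in> Lp_ball p Om r" for w :: "'k \<Rightarrow> real^'n"
  proof -
    note wL = x_L1[OF Om pq w]
    note hw = hold[OF w]
    have bi: "integrable ?L (\<lambda>s. norm (w s) * g s + Mx * norm (w s))"
      using hw wL(1) by auto
    have mK: "(\<lambda>s. K xi s *v w s) \<in> borel_measurable ?L" using Km wL(5) by measurable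
    show "integrable ?L (\<lambda>s. K xi s *v w s)"
    proof (rule Bochner_Integration.integrable_bound[OF bi mK], intro AE_I2 impI)
      fix s assume "s \<in> space ?L"
      then have s: "s \<in> Om" by simp
      have "norm (K xi s *v w s) \<le> norm (K xi s) * norm (w s)" by (rule norm_mv)
      also have "norm (K xi s) \<le> g s + Mx"
        using norm_triangle_ineq[of "K xi s - Kl xi s" "Kl xi s"] Klb[OF s] by (simp add: g_def)
      then have "norm (K xi s) * norm (w s) \<le> (g s + Mx) * norm (w s)"
        by (rule mult_right_mono) simp
      finally have "norm (K xi s *v w s) \<le> norm (w s) * g s + Mx * norm (w s)"
        by (simp add: algebra_simps)
      then show "norm (K xi s *v w s) \<le> norm (norm (w s) * g s + Mx * norm (w s))"
        by (metis abs_ge_self order_trans real_norm_def)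
    qed
    have bi2: "integrable ?L (\<lambda>s. Mx * norm (w s))" using wL(1) by auto
    have mKl: "(\<lambda>s. Kl xi s *v w s) \<in> borel_measurable ?L" using Klm wL(5) by measurable
    show "integrable ?L (\<lambda>s. Kl xi s *v w s)"
    proof (rule Bochner_Integration.integrable_bound[OF bi2 mKl], intro AE_I2 impI)
      fix s assume "s \<in> space ?L"
      then have s: "s \<in> Om" by simp
      have "norm (Kl xi s *v w s) \<le> norm (Kl xi s) * norm (w s)" by (rule norm_mv)
      also have "\<dots> \<le> Mx * norm (w s)" by (rule mult_right_mono[OF Klb[OF s]]) simp
      finally show "norm (Kl xi s *v w s) \<le> norm (Mx * norm (w s))"
        by (metis abs_ge_self order_trans real_norm_def)
    qed
  qed
  define Dx where "Dx s = (K xi s - Kl xi s) *v (x s - y s)" for s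
  have Dx_eq: "Dx s = (K xi s *v x s - K xi s *v y s) - (Kl xi s *v x s - Kl xi s *v y s)" for s
    unfolding Dx_def by (simp add: algebra_simps)
  have Dxi: "integrable ?L Dx"
    unfolding Dx_eq[abs_def] using Ki[OF x] Ki[OF y] by auto
  have Kli: "integrable ?L (\<lambda>s. Kl xi s *v (x s - y s))"
    using Ki(2)[OF x] Ki(2)[OF y] by (simp add: matrix_vector_mult_diff_distrib)
  have "HS_op Om K x xi - HS_op Om K y xi = (\<integral>s. K xi s *v x s - K xi s *v y s \<partial>?L)"
    unfolding HS_op_def using Ki(1)[OF x] Ki(1)[OF y] by simp
  also have "\<dots> = (\<integral>s. Dx s + Kl xi s *v (x s - y s) \<partial>?L)"
    by (rule Bochner_Integration.integral_cong[OF refl]) (simp add: Dx_eq algebra_simps)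
  also have "\<dots> = (\<integral>s. Dx s \<partial>?L) + (\<integral>s. Kl xi s *v (x s - y s) \<partial>?L)"
    using Dxi Kli by (rule Bochner_Integration.integral_add)
  finally have eq: "HS_op Om K x xi - HS_op Om K y xi = (\<integral>s. Dx s \<partial>?L) + (\<integral>s. Kl xi s *v (x s - y s) \<partial>?L)" .
  have bi: "integrable ?L (\<lambda>s. norm (x s) * g s + norm (y s) * g s)" using hx hy by auto
  have "norm (\<integral>s. Dx s \<partial>?L) \<le> (\<integral>s. norm (x s) * g s + norm (y s) * g s \<partial>?L)"
  proof (rule Bochner_Integration.integral_norm_bound_integral[OF Dxi bi])
    fix s
    have "norm (Dx s) \<le> g s * norm (x s - y s)" unfolding Dx_def g_def by (rule norm_mv)
    also have "\<dots> \<le> g s * (norm (x s) + norm (y s))"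
      by (rule mult_left_mono[OF norm_triangle_ineq4 g0])
    finally show "norm (Dx s) \<le> norm (x s) * g s + norm (y s) * g s" by (simp add: algebra_simps)
  qed
  also have "\<dots> = (\<integral>s. norm (x s) * g s \<partial>?L) + (\<integral>s. norm (y s) * g s \<partial>?L)"
    using hx hy by (intro Bochner_Integration.integral_add) auto
  also have "\<dots> \<le> 2 * r * enn2real kx powr (1/q)" using hx hy by linarith
  finally have "norm (\<integral>s. Dx s \<partial>?L) \<le> 2 * r * enn2real kx powr (1/q)" .
  moreover have "norm (HS_op Om K x xi - HS_op Om K y xi) = norm ((\<integral>s. Dx s \<partial>?L) + (\<integral>s. Kl xi s *v (x s - y s) \<partial>?L))"
    using eq by simp
  ultimately show ?thesis
    using KlC norm_triangle_ineq[of "\<integral>s. Dx s \<partial>?L" "\<integral>s. Kl xi s *v (x s - y s) \<partial>?L"]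
    by linarith
qed

theorem theorem1:
  fixes Om :: "(real^'k) set"
    and p q r lam gamma D sg :: real
    and K Kl :: "real^'k \<Rightarrow> real^'k \<Rightarrow> real^'n^'m"
    and N a :: nat
    and P :: "nat \<Rightarrow> (real^'k) set"
    and Es :: "(real^'n) set"
  assumes Om: "compact Om" "Om \<noteq> {}"
    and pq: "p > 1" "1 / p + 1 / q = 1"
    and r: "r > 0"
    and K_meas: "(\<lambda>(xi, s). K xi s) \<in> borel_measurable (lebesgue_on (Om \<times> Om))"
    and K_int: "integrable (lebesgue_on (Om \<times> Om)) (\<lambda>(xi, s). norm (K xi s) powr q)"
    and lam: "lam > 0"
    and Kl_cont: "continuous_on (Om \<times> Om) (\<lambda>(xi, s). Kl xi s)"
    and Kl_approx: "(\<integral>z. norm (K (fst z) (snd z) - Kl (fst z) (snd z)) powr q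
                        \<partial>(lebesgue_on (Om \<times> Om))) powr (1 / q) \<le> lam / (2 * r)"
    and params: "gamma > 0" "D > 0" "sg > 0"
    and part: "Delta_partition Om D N P"
    and a: "a \<ge> 1"
    and net: "sigma_net (sphere 0 1) sg Es"
  shows "haus_dist q Om (HS_op Om K ` Lp_ball p Om r)
                        (HS_op Om K ` disc_ball p Om r N P gamma a Es)
         \<le> ereal (lam
             + 2 * r powr p * measure lebesgue Om powr (1 / q) * kernel_max Om Kl / gamma powr (p - 1)
             + 2 * r * measure lebesgue Om powr (2 / q) * kernel_modulus Om Kl D
             + kernel_max Om Kl * measure lebesgue Om powr (1 + 1 / q) * (gamma / real a)
             + kernel_max Om Kl * measure lebesgue Om powr (1 + 1 / q) * gamma * sg)"
proof -
  let ?L = "lebesgue_on Om"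
  let ?mu = "measure lebesgue Om"
  let ?Mx = "kernel_max Om Kl"
  let ?W = "kernel_modulus Om Kl D"
  have Oc: "closed Om" using Om(1) by (rule compact_imp_closed)
  have Oms: "Om \<in> sets lebesgue" using Om(1) by (simp add: borel_compact)
  have q: "q > 1"
  proof -
    have "1/q = 1 - 1/p" using pq by simp
    moreover have "1/p > 0" "1/p < 1" using pq by auto
    ultimately have "1/q > 0" "1/q < 1" by auto
    then have "q > 0" by simp
    with \<open>1/q < 1\<close> show "q > 1" by (simp add: divide_less_eq_1_pos)
  qed
  note KB = kernel_bounds[OF Om(1) Om(2) Kl_cont, of D]
  have D0: "D \<ge> 0" using params by simp
  have Mx0: "?Mx \<ge> 0" using KB(2) D0 by blast
  have W0: "?W \<ge> 0" using KB(4) D0 by blast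
  have Klb: "\<And>xi s. xi \<in> Om \<Longrightarrow> s \<in> Om \<Longrightarrow> norm (Kl xi s) \<le> ?Mx" using KB(1) D0 by blast
  have Klw: "\<And>xi s1 s2. xi \<in> Om \<Longrightarrow> s1 \<in> Om \<Longrightarrow> s2 \<in> Om \<Longrightarrow> norm (s2 - s1) \<le> D \<Longrightarrow>
            norm (Kl xi s2 - Kl xi s1) \<le> ?W" using KB(3) D0 by blast
  have Klm: "(\<lambda>s. Kl xi s) \<in> borel_measurable ?L" if xi: "xi \<in> Om" for xi
  proof -
    have "continuous_on Om (\<lambda>s. (\<lambda>(xi, s). Kl xi s) (xi, s))"
      by (rule continuous_on_compose2[OF Kl_cont]) (use xi in \<open>auto intro!: continuous_intros\<close>)
    then have "continuous_on Om (\<lambda>s. Kl xi s)" by simp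
    then show ?thesis using Oms by (rule continuous_imp_measurable_on_sets_lebesgue)
  qed
  have OO: "Om \<times> Om \<in> sets lebesgue" using Oc by (intro closed_sets_lebesgue closed_Times) auto
  have Klm2: "(\<lambda>(xi, s). Kl xi s) \<in> borel_measurable (lebesgue_on (Om \<times> Om))"
    using Kl_cont OO by (rule continuous_imp_measurable_on_sets_lebesgue)
  define G where "G xi s = norm (K xi s - Kl xi s) powr q" for xi s
  have G0: "\<And>xi s. G xi s \<ge> 0" by (simp add: G_def)
  have Km': "(\<lambda>z. K (fst z) (snd z)) \<in> borel_measurable (lebesgue_on (Om \<times> Om))"
    using K_meas by (simp add: case_prod_unfold)
  have Klm': "(\<lambda>z. Kl (fst z) (snd z)) \<in> borel_measurable (lebesgue_on (Om \<times> Om))"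
    using Klm2 by (simp add: case_prod_unfold)
  have Gm': "(\<lambda>z. G (fst z) (snd z)) \<in> borel_measurable (lebesgue_on (Om \<times> Om))"
    unfolding G_def using Km' Klm' by measurable
  have Gm: "(\<lambda>(xi, s). G xi s) \<in> borel_measurable (lebesgue_on (Om \<times> Om))"
    using Gm' by (simp add: case_prod_unfold)
  have finOO: "finite_measure (lebesgue_on (Om \<times> Om))"
    using Om(1) by (intro finite_measure_lebesgue_on lmeasurable_compact compact_Times)
  have Gi: "integrable (lebesgue_on (Om \<times> Om)) (\<lambda>(xi, s). G xi s)"
  proof -
    have Kqi: "integrable (lebesgue_on (Om \<times> Om)) (\<lambda>z. norm (K (fst z) (snd z)) powr q)"
      using K_int by (simp add: case_prod_unfold)
    have bi: "integrable (lebesgue_on (Om \<times> Om)) (\<lambda>z. 2 powr q * (norm (K (fst z) (snd z)) powr q + ?Mx powr q))"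
    proof -
      have c: "integrable (lebesgue_on (Om \<times> Om)) (\<lambda>z. ?Mx powr q)"
        by (rule finite_measure.integrable_const[OF finOO])
      have "integrable (lebesgue_on (Om \<times> Om)) (\<lambda>z. norm (K (fst z) (snd z)) powr q + ?Mx powr q)"
        by (rule Bochner_Integration.integrable_add[OF Kqi c])
      then show ?thesis by simp
    qed
    have "integrable (lebesgue_on (Om \<times> Om)) (\<lambda>z. G (fst z) (snd z))"
    proof (rule Bochner_Integration.integrable_bound[OF bi Gm'], intro AE_I2 impI)
      fix z assume "z \<in> space (lebesgue_on (Om \<times> Om))"
      then have z: "fst z \<in> Om" "snd z \<in> Om" by (auto simp: mem_Times_iff)
      let ?a = "norm (K (fst z) (snd z))"
      have "norm (K (fst z) (snd z) - Kl (fst z) (snd z)) \<le> ?a + ?Mx"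
        using norm_triangle_ineq4[of "K (fst z) (snd z)" "Kl (fst z) (snd z)"] Klb[OF z] by linarith
      also have "\<dots> \<le> 2 * max ?a ?Mx" by simp
      finally have "G (fst z) (snd z) \<le> (2 * max ?a ?Mx) powr q"
        unfolding G_def using q by (intro powr_mono2) auto
      also have "\<dots> = 2 powr q * max ?a ?Mx powr q" using Mx0 by (simp add: powr_mult)
      also have "\<dots> \<le> 2 powr q * (?a powr q + ?Mx powr q)"
        by (intro mult_left_mono) (auto simp: max_def)
      finally show "norm (G (fst z) (snd z)) \<le> norm (2 powr q * (?a powr q + ?Mx powr q))"
        using G0 by simp
    qed
    then show ?thesis by (simp add: case_prod_unfold)
  qed
  obtain kq where kqm: "kq \<in> borel_measurable lborel"
    and aekq: "AE xi in lborel. xi \<in> Om \<longrightarrow> (\<integral>\<^sup>+s. ennreal (G xi s) \<partial>?L) = kq xi"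
    and kqI: "(\<integral>\<^sup>+xi. kq xi \<partial>lborel) = ennreal (\<integral>z. (\<lambda>(xi,s). G xi s) z \<partial>lebesgue_on (Om \<times> Om))"
    using kernel_Lq[OF Oc Gm Gi G0] by blast
  define I0 where "I0 = (\<integral>z. (\<lambda>(xi,s). G xi s) z \<partial>lebesgue_on (Om \<times> Om))"
  have I00: "I0 \<ge> 0" unfolding I0_def by (intro integral_nonneg_AE) (auto simp: G0 case_prod_unfold)
  have I0b: "I0 \<le> (lam / (2 * r)) powr q"
  proof -
    have e: "I0 = (\<integral>z. norm (K (fst z) (snd z) - Kl (fst z) (snd z)) powr q \<partial>lebesgue_on (Om \<times> Om))"
      unfolding I0_def G_def by (simp add: case_prod_unfold)
    have "I0 = (I0 powr (1/q)) powr q" using I00 q by (simp add: powr_powr)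
    also have "\<dots> \<le> (lam / (2 * r)) powr q"
      using Kl_approx q e by (intro powr_mono2) auto
    finally show ?thesis .
  qed
  have aeK: "AE xi in lborel. xi \<in> Om \<longrightarrow> (\<lambda>s. K xi s) \<in> borel_measurable ?L"
    by (rule kernel_sections[OF Oc K_meas])
  have aefin: "AE xi in lborel. kq xi \<noteq> \<infinity>"
    using kqm kqI by (intro nn_integral_PInf_AE) auto
  have net_sub: "Es \<subseteq> sphere 0 1" using net unfolding sigma_net_def by auto
  define C where "C = ?Mx * r powr p / gamma powr (p - 1) + 2 * ?W * (?mu powr (1/q) * r)
      + ?Mx * ?mu * (gamma / real a + gamma * sg)"
  define Bnd where "Bnd = lam
             + 2 * r powr p * ?mu powr (1 / q) * ?Mx / gamma powr (p - 1)
             + 2 * r * ?mu powr (2 / q) * ?W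
             + ?Mx * ?mu powr (1 + 1 / q) * (gamma / real a)
             + ?Mx * ?mu powr (1 + 1 / q) * gamma * sg"
  have C0: "C \<ge> 0" unfolding C_def using Mx0 W0 params r by (intro add_nonneg_nonneg) auto
  have CB: "lam + C * ?mu powr (1/q) \<le> Bnd"
  proof -
    have m0: "?mu \<ge> 0" by simp
    have e1: "?mu powr (1/q) * ?mu powr (1/q) = ?mu powr (2/q)"
      by (simp add: powr_add[symmetric])
    have e2: "?mu * ?mu powr (1/q) = ?mu powr (1 + 1/q)"
    proof (cases "?mu = 0")
      case False then show ?thesis using m0 by (simp add: powr_add)
    qed simp
    have t1: "?Mx * r powr p / gamma powr (p - 1) * ?mu powr (1/q) \<le> 2 * r powr p * ?mu powr (1 / q) * ?Mx / gamma powr (p - 1)"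
    proof -
      have T0: "0 \<le> ?Mx * r powr p / gamma powr (p - 1) * ?mu powr (1/q)" using Mx0 by simp
      have "2 * r powr p * ?mu powr (1 / q) * ?Mx / gamma powr (p - 1) = 2 * (?Mx * r powr p / gamma powr (p - 1) * ?mu powr (1/q))"
        by (simp add: algebra_simps)
      then show ?thesis using T0 by linarith
    qed
    have "C * ?mu powr (1/q) = ?Mx * r powr p / gamma powr (p - 1) * ?mu powr (1/q)
        + 2 * r * (?mu powr (1/q) * ?mu powr (1/q)) * ?W
        + ?Mx * (?mu * ?mu powr (1/q)) * (gamma / real a) + ?Mx * (?mu * ?mu powr (1/q)) * gamma * sg"
      unfolding C_def by (simp add: algebra_simps)
    also have "\<dots> = ?Mx * r powr p / gamma powr (p - 1) * ?mu powr (1/q)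
        + 2 * r * ?mu powr (2/q) * ?W
        + ?Mx * ?mu powr (1 + 1/q) * (gamma / real a) + ?Mx * ?mu powr (1 + 1/q) * gamma * sg"
      by (simp only: e1 e2)
    finally show ?thesis unfolding Bnd_def using t1 by linarith
  qed
  have key: "\<exists>y\<in>disc_ball p Om r N P gamma a Es. Lp_norm q Om (\<lambda>xi. HS_op Om K x xi - HS_op Om K y xi) \<le> Bnd"
    if x: "x \<in> Lp_ball p Om r" for x
  proof -
    obtain y v z l where y: "y \<in> disc_ball p Om r N P gamma a Es"
      and yP: "\<forall>i<N. \<forall>s\<in>P i. y s = z i *\<^sub>R l i"
      and vI: "\<forall>i<N. measure lebesgue (P i) *\<^sub>R v i = (\<integral>s. indicator (P i) s *\<^sub>R (if norm (x s) \<le> gamma then x s else 0) \<partial>?L)"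
      and vN: "\<forall>i<N. measure lebesgue (P i) * norm (v i) \<le> (\<integral>s. indicator (P i) s * norm (if norm (x s) \<le> gamma then x s else 0) \<partial>?L)"
      and vz: "\<forall>i<N. norm (v i - z i *\<^sub>R l i) \<le> gamma / real a + gamma * sg"
      using cell_construction[OF Om(1) pq r params(1) a part net x] by blast
    have yb: "y \<in> Lp_ball p Om r"
      by (rule disc_in_ball(1)[OF Om(1) pq(1) r part net_sub y params(1)])
    have KlC: "norm (\<integral>s. Kl xi s *v (x s - y s) \<partial>?L) \<le> C" if xi: "xi \<in> Om" for xi
      unfolding C_def
      by (rule pointwise_bound[OF Om(1) pq params(1) part x refl yP vI vN vz Klm[OF xi] Klb[OF xi] Klw[OF xi] W0 Mx0])
    have ae: "AE xi in lborel. xi \<in> Om \<longrightarrow> norm (HS_op Om K x xi - HS_op Om K y xi) \<le> 2 * r * enn2real (kq xi) powr (1/q) + C"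
      using aeK aekq aefin
    proof (eventually_elim, intro impI)
      fix xi assume h: "xi \<in> Om \<longrightarrow> (\<lambda>s. K xi s) \<in> borel_measurable ?L"
        "xi \<in> Om \<longrightarrow> (\<integral>\<^sup>+s. ennreal (G xi s) \<partial>?L) = kq xi" "kq xi \<noteq> \<infinity>" and xi: "xi \<in> Om"
      show "norm (HS_op Om K x xi - HS_op Om K y xi) \<le> 2 * r * enn2real (kq xi) powr (1/q) + C"
      proof -
        have a1: "(\<lambda>s. K xi s) \<in> borel_measurable ?L" using h(1) xi by blast
        have a2: "(\<integral>\<^sup>+s. ennreal (norm (K xi s - Kl xi s) powr q) \<partial>?L) = kq xi"
          using h(2) xi by (simp add: G_def)
        show ?thesis
          by (rule good_bound[where K=K and Kl=Kl and xi=xi and kx="kq xi",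
                OF Om(1) pq x yb a1 Klm[OF xi] Klb[OF xi] a2 h(3) KlC[OF xi]])
      qed
    qed
    have "Lp_norm q Om (\<lambda>xi. HS_op Om K x xi - HS_op Om K y xi) \<le> lam + C * ?mu powr (1/q)"
      by (rule Lq_bound[OF Om(1) q lam r C0 kqm kqI[folded I0_def] I0b ae])
    then have "Lp_norm q Om (\<lambda>xi. HS_op Om K x xi - HS_op Om K y xi) \<le> Bnd"
      using CB by linarith
    then show ?thesis using y by blast
  qed
  have sub: "disc_ball p Om r N P gamma a Es \<subseteq> Lp_ball p Om r"
    using disc_in_ball(1)[OF Om(1) pq(1) r part net_sub _ params(1)] by blast
  have B0: "Bnd \<ge> 0"
    using CB C0 lam by (smt (verit) mult_nonneg_nonneg powr_ge_zero)
  have h1: "(SUP u\<in>HS_op Om K ` Lp_ball p Om r. INF v\<in>HS_op Om K ` disc_ball p Om r N P gamma a Es.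
              ereal (Lp_norm q Om (\<lambda>xi. u xi - v xi))) \<le> ereal Bnd"
  proof (rule SUP_least)
    fix u assume "u \<in> HS_op Om K ` Lp_ball p Om r"
    then obtain x where x: "x \<in> Lp_ball p Om r" and u: "u = HS_op Om K x" by blast
    obtain y where y: "y \<in> disc_ball p Om r N P gamma a Es"
      and yb: "Lp_norm q Om (\<lambda>xi. HS_op Om K x xi - HS_op Om K y xi) \<le> Bnd"
      using key[OF x] by blast
    have "(INF v\<in>HS_op Om K ` disc_ball p Om r N P gamma a Es. ereal (Lp_norm q Om (\<lambda>xi. u xi - v xi)))
        \<le> ereal (Lp_norm q Om (\<lambda>xi. u xi - HS_op Om K y xi))"
      using y by (intro INF_lower) auto
    also have "\<dots> \<le> ereal Bnd" using yb u by simp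
    finally show "(INF v\<in>HS_op Om K ` disc_ball p Om r N P gamma a Es. ereal (Lp_norm q Om (\<lambda>xi. u xi - v xi))) \<le> ereal Bnd" .
  qed
  have h2: "(SUP v\<in>HS_op Om K ` disc_ball p Om r N P gamma a Es. INF u\<in>HS_op Om K ` Lp_ball p Om r.
              ereal (Lp_norm q Om (\<lambda>xi. u xi - v xi))) \<le> ereal Bnd"
  proof (rule SUP_least)
    fix v assume "v \<in> HS_op Om K ` disc_ball p Om r N P gamma a Es"
    then obtain y where y: "y \<in> disc_ball p Om r N P gamma a Es" and v: "v = HS_op Om K y" by blast
    have "(INF u\<in>HS_op Om K ` Lp_ball p Om r. ereal (Lp_norm q Om (\<lambda>xi. u xi - v xi)))
        \<le> ereal (Lp_norm q Om (\<lambda>xi. v xi - v xi))"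
      using y sub v by (intro INF_lower) auto
    also have "Lp_norm q Om (\<lambda>xi. v xi - v xi) = 0" unfolding Lp_norm_def using q by simp
    finally show "(INF u\<in>HS_op Om K ` Lp_ball p Om r. ereal (Lp_norm q Om (\<lambda>xi. u xi - v xi))) \<le> ereal Bnd"
      using B0 by (simp add: order_trans)
  qed
  show ?thesis
    unfolding haus_dist_def Bnd_def[symmetric] using h1 h2 by simp
qed

end
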